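(* Let $\mu,\sigma,\rho>0$, $\Delta>0$, and suppose $K\ge \mu/\rho-u_0$. Define $V(x)=V_0(x)$ for $0\le x\le u_0$ and $V(x)=x-u_0+\mu/\rho$ for $x>u_0$. Then $V$ is a $C^2$ function on $[0,\infty)$ and satisfies, for $x>0$: (a) $V(0)=0$; (b) $V(x)\ge MV(x)$; (c) $(A-\rho)V(x)\le0$; (d) $V'(x)\ge1$; (e) $[V(x)-MV(x)][(A-\rho)V(x)][V'(x)-1]=0$.
   Context: $A=\frac12\sigma^2\frac{d^2}{dx^2}+\mu\frac{d}{dx}$ is the generator of $X(t)=X(0)+\mu t+\sigma W(t)$, $W$ standard Brownian motion. Let $r_1=(-\mu+\sqrt{\mu^2+2\sigma^2\rho})/\sigma^2$, $r_2=(\mu+\sqrt{\mu^2+2\sigma^2\rho})/\sigma^2$, $u_0=\frac{1}{r_1+r_2}\ln\frac{\rho+\mu r_2}{\rho-\mu r_1}$, and let $V_0:\mathbf{R}\to\mathbf{R}$ be the solution of $(A-\rho)V_0=0$ with $V_0(u_0)=\mu/\rho$, $V_0'(u_0)=1$ (for this $u_0$ one has $V_0(0)=0$). $K\ge 0$ is the fixed cost of capital issuance. For $f$ on $[0,\infty)$, $Mf(x)=E\big[e^{-\rho\Delta}\sup_{s\in\mathbf{R}}[f(X(\Delta)+s)-s-K]I_{\tau>\Delta}\,|\,X(0)=x\big]$, $x>0$, with $\tau$ the first hitting time of $0$. *)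

theory Defs
  imports "HOL-Probability.Probability"
begin

definition std_BM :: "'a measure \<Rightarrow> (real \<Rightarrow> 'a \<Rightarrow> real) \<Rightarrow> bool" where
  "std_BM P W \<longleftrightarrow>
     prob_space P \<and>
     (\<forall>t. W t \<in> borel_measurable P) \<and>
     (\<forall>\<omega>\<in>space P. W 0 \<omega> = 0 \<and> continuous_on {0..} (\<lambda>t. W t \<omega>)) \<and>
     (\<forall>s t. 0 \<le> s \<and> s < t \<longrightarrow>
        distributed P lborel (\<lambda>\<omega>. W t \<omega> - W s \<omega>)
          (\<lambda>y. ennreal (normal_density 0 (sqrt (t - s)) y))) \<and>
     (\<forall>(ts :: nat \<Rightarrow> real) n. (ts 0 \<ge> 0 \<and> (\<forall>i<n. ts i < ts (Suc i))) \<longrightarrow>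
        prob_space.indep_vars P (\<lambda>_. borel) (\<lambda>i \<omega>. W (ts (Suc i)) \<omega> - W (ts i) \<omega>) {..<n})"

definition Xproc :: "real \<Rightarrow> real \<Rightarrow> (real \<Rightarrow> 'a \<Rightarrow> real) \<Rightarrow> real \<Rightarrow> real \<Rightarrow> 'a \<Rightarrow> real" where
  "Xproc \<mu> \<sigma> W x t \<omega> = x + \<mu> * t + \<sigma> * W t \<omega>"

text \<open>First hitting time of 0 (value \<infinity> if 0 is never hit).\<close>
definition hit0 :: "real \<Rightarrow> real \<Rightarrow> (real \<Rightarrow> 'a \<Rightarrow> real) \<Rightarrow> real \<Rightarrow> 'a \<Rightarrow> ereal" where
  "hit0 \<mu> \<sigma> W x \<omega> = Inf (ereal ` {t. t \<ge> 0 \<and> Xproc \<mu> \<sigma> W x t \<omega> = 0})"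

definition Mop :: "'a measure \<Rightarrow> (real \<Rightarrow> 'a \<Rightarrow> real) \<Rightarrow> real \<Rightarrow> real \<Rightarrow> real \<Rightarrow> real \<Rightarrow> real
                   \<Rightarrow> (real \<Rightarrow> real) \<Rightarrow> real \<Rightarrow> real" where
  "Mop P W \<mu> \<sigma> \<rho> \<Delta> K f x =
     (\<integral>\<omega>. exp (- \<rho> * \<Delta>) *
            Sup {f (Xproc \<mu> \<sigma> W x \<Delta> \<omega> + s) - s - K | s. Xproc \<mu> \<sigma> W x \<Delta> \<omega> + s \<ge> 0} *
            indicator {\<omega>\<in>space P. hit0 \<mu> \<sigma> W x \<omega> > ereal \<Delta>} \<omega> \<partial>P)"

definition r1 :: "real \<Rightarrow> real \<Rightarrow> real \<Rightarrow> real" where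
  "r1 \<mu> \<sigma> \<rho> = (- \<mu> + sqrt (\<mu>\<^sup>2 + 2 * \<sigma>\<^sup>2 * \<rho>)) / \<sigma>\<^sup>2"

definition r2 :: "real \<Rightarrow> real \<Rightarrow> real \<Rightarrow> real" where
  "r2 \<mu> \<sigma> \<rho> = (\<mu> + sqrt (\<mu>\<^sup>2 + 2 * \<sigma>\<^sup>2 * \<rho>)) / \<sigma>\<^sup>2"

definition u0 :: "real \<Rightarrow> real \<Rightarrow> real \<Rightarrow> real" where
  "u0 \<mu> \<sigma> \<rho> = 1 / (r1 \<mu> \<sigma> \<rho> + r2 \<mu> \<sigma> \<rho>) *
      ln ((\<rho> + \<mu> * r2 \<mu> \<sigma> \<rho>) / (\<rho> - \<mu> * r1 \<mu> \<sigma> \<rho>))"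

definition C2_on_with :: "real set \<Rightarrow> (real \<Rightarrow> real) \<Rightarrow> (real \<Rightarrow> real) \<Rightarrow> (real \<Rightarrow> real) \<Rightarrow> bool" where
  "C2_on_with S f f1 f2 \<longleftrightarrow>
     (\<forall>x\<in>S. (f has_real_derivative f1 x) (at x within S) \<and>
            (f1 has_real_derivative f2 x) (at x within S)) \<and> continuous_on S f2"

end

theory Submission
  imports Defs
begin

locale prm =
  fixes mu sg rh :: real
  assumes mu: "mu > 0" and sg: "sg > 0" and rh: "rh > 0"
begin

abbreviation "S \<equiv> sqrt (mu\<^sup>2 + 2 * sg\<^sup>2 * rh)"
abbreviation "R1 \<equiv> r1 mu sg rh"
abbreviation "R2 \<equiv> r2 mu sg rh"
abbreviation "U0 \<equiv> u0 mu sg rh"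

lemma S_sq: "S * S = mu\<^sup>2 + 2 * sg\<^sup>2 * rh"
  using mu sg rh by (simp add: add_nonneg_nonneg)

lemma abs_aux: "\<bar>mu * mu + rh * (sg * (sg * 2))\<bar> = mu * mu + rh * (sg * (sg * 2))"
  using mu sg rh by simp

lemma S_gt: "S > mu"
proof -
  have "mu\<^sup>2 < mu\<^sup>2 + 2 * sg\<^sup>2 * rh" using sg rh by simp
  hence "sqrt (mu\<^sup>2) < S" by (rule real_sqrt_less_mono)
  thus ?thesis using mu by simp
qed

lemma R1_eq: "R1 = (S - mu) / sg\<^sup>2" unfolding r1_def by simp
lemma R2_eq: "R2 = (S + mu) / sg\<^sup>2" unfolding r2_def by simp

lemma R1_pos: "R1 > 0" using S_gt sg by (simp add: R1_eq)
lemma R2_pos: "R2 > 0" using S_gt sg mu by (simp add: R2_eq)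

lemma RR: "rh * R1 + rh * R2 > 0" "R1 + R2 > 0"
  using rh R1_pos R2_pos by (simp_all add: add_pos_pos)

lemma R2_minus_R1: "R2 - R1 = 2 * mu / sg\<^sup>2"
  using sg by (simp add: R1_eq R2_eq field_simps)

lemma R1R2: "R1 * R2 = 2 * rh / sg\<^sup>2"
proof -
  have "R1 * R2 = (S\<^sup>2 - mu\<^sup>2) / (sg\<^sup>2)\<^sup>2" using sg
    by (simp add: R1_eq R2_eq field_simps power2_eq_square)
  also have "\<dots> = 2 * rh / sg\<^sup>2" using sg by (simp add: power2_eq_square S_sq field_simps abs_aux)
  finally show ?thesis .
qed

lemma quad1: "sg\<^sup>2 * R1\<^sup>2 / 2 + mu * R1 = rh"
proof -
  have "sg\<^sup>2 * R1\<^sup>2 / 2 + mu * R1 = R1 * (sg\<^sup>2 * R1 + 2 * mu) / 2" by (simp add: field_simps power2_eq_square)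
  also have "sg\<^sup>2 * R1 + 2 * mu = sg\<^sup>2 * R2" using R2_minus_R1 sg by (simp add: field_simps)
  also have "R1 * (sg\<^sup>2 * R2) / 2 = rh" using R1R2 sg by (simp add: field_simps)
  finally show ?thesis .
qed

lemma quad2: "sg\<^sup>2 * R2\<^sup>2 / 2 - mu * R2 = rh"
proof -
  have "sg\<^sup>2 * R2\<^sup>2 / 2 - mu * R2 = R2 * (sg\<^sup>2 * R2 - 2 * mu) / 2" by (simp add: field_simps power2_eq_square)
  also have "sg\<^sup>2 * R2 - 2 * mu = sg\<^sup>2 * R1" using R2_minus_R1 sg by (simp add: field_simps)
  also have "R2 * (sg\<^sup>2 * R1) / 2 = rh" using R1R2 sg by (simp add: field_simps)
  finally show ?thesis .
qed

lemma den_pos: "rh - mu * R1 > 0"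
proof -
  have "sg\<^sup>2 * (rh - mu * R1) = (S - mu)\<^sup>2 / 2" using sg
    by (simp add: R1_eq field_simps power2_eq_square S_sq abs_aux)
  moreover have "(S - mu)\<^sup>2 / 2 > 0" using S_gt by simp
  ultimately show ?thesis using sg by (metis zero_less_mult_pos zero_less_power)
qed

lemma num_pos: "rh + mu * R2 > 0" using rh mult_pos_pos[OF mu R2_pos] by linarith

lemma ratio_gt1: "(rh + mu * R2) / (rh - mu * R1) > 1"
  using den_pos mult_pos_pos[OF mu R1_pos] mult_pos_pos[OF mu R2_pos] by (simp add: field_simps)

lemma U0_pos: "U0 > 0"
  unfolding u0_def using ratio_gt1 R1_pos R2_pos by simp

lemma exp_U0: "exp ((R1 + R2) * U0) = (rh + mu * R2) / (rh - mu * R1)"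
proof -
  have "(R1 + R2) * U0 = ln ((rh + mu * R2) / (rh - mu * R1))"
    unfolding u0_def using R1_pos R2_pos by simp
  thus ?thesis using ratio_gt1 by simp
qed

definition "kap = (rh + mu * R2) / (rh * (R1 + R2)) * exp (- R1 * U0)"
definition "E y = kap * (exp (R1 * y) - exp (- R2 * y))"
definition "E1 y = kap * (R1 * exp (R1 * y) + R2 * exp (- R2 * y))"
definition "E2 y = kap * (R1\<^sup>2 * exp (R1 * y) - R2\<^sup>2 * exp (- R2 * y))"

lemma kap_pos: "kap > 0" unfolding kap_def using num_pos rh R1_pos R2_pos by simp

abbreviation "DD \<equiv> rh * (R1 + R2)"
lemma DD_pos: "DD > 0" using rh RR by simp

lemma kap_p: "kap * exp (R1 * U0) = (rh + mu * R2) / DD"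
proof -
  have "kap * exp (R1 * U0) = (rh + mu * R2) / DD * (exp (- R1 * U0) * exp (R1 * U0))"
    by (simp add: kap_def mult.assoc)
  also have "exp (- R1 * U0) * exp (R1 * U0) = 1" by (simp add: exp_minus)
  finally show ?thesis by simp
qed

lemma kap_q: "kap * exp (- R2 * U0) = (rh - mu * R1) / DD"
proof -
  have "kap * exp (- R2 * U0) = (rh + mu * R2) / DD * exp (- ((R1 + R2) * U0))"
    by (simp add: kap_def mult.assoc exp_add[symmetric] algebra_simps)
  also have "exp (- ((R1 + R2) * U0)) = (rh - mu * R1) / (rh + mu * R2)"
    unfolding exp_minus exp_U0 by simp
  also have "(rh + mu * R2) / DD * ((rh - mu * R1) / (rh + mu * R2)) = (rh - mu * R1) / DD"
    using num_pos by simp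
  finally show ?thesis .
qed

lemma E_0: "E 0 = 0" unfolding E_def by simp

lemma E_U0: "E U0 = mu / rh"
proof -
  have "E U0 = kap * exp (R1 * U0) - kap * exp (- R2 * U0)" unfolding E_def by (simp add: algebra_simps)
  also have "\<dots> = ((rh + mu * R2) - (rh - mu * R1)) / DD" unfolding kap_p kap_q by (simp only: diff_divide_distrib[symmetric] times_divide_eq_right)
  also have "(rh + mu * R2) - (rh - mu * R1) = mu * (R1 + R2)" by (simp add: algebra_simps)
  also have "mu * (R1 + R2) / DD = mu / rh" using RR by simp
  finally show ?thesis .
qed

lemma E1_U0: "E1 U0 = 1"
proof -
  have "E1 U0 = R1 * (kap * exp (R1 * U0)) + R2 * (kap * exp (- R2 * U0))" unfolding E1_def by (simp add: algebra_simps)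
  also have "\<dots> = (R1 * (rh + mu * R2) + R2 * (rh - mu * R1)) / DD" unfolding kap_p kap_q by (simp only: add_divide_distrib[symmetric] times_divide_eq_right)
  also have "R1 * (rh + mu * R2) + R2 * (rh - mu * R1) = DD" by (simp add: algebra_simps)
  finally show ?thesis using DD_pos rh RR by simp
qed

lemma E2_U0: "E2 U0 = 0"
proof -
  have "E2 U0 = R1\<^sup>2 * (kap * exp (R1 * U0)) - R2\<^sup>2 * (kap * exp (- R2 * U0))" unfolding E2_def by (simp add: algebra_simps)
  also have "\<dots> = (R1\<^sup>2 * (rh + mu * R2) - R2\<^sup>2 * (rh - mu * R1)) / DD" unfolding kap_p kap_q by (simp only: diff_divide_distrib[symmetric] times_divide_eq_right)
  also have "R1\<^sup>2 * (rh + mu * R2) - R2\<^sup>2 * (rh - mu * R1) = (R1 + R2) * (rh * (R1 - R2) + mu * (R1 * R2))"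
    by (simp add: algebra_simps power2_eq_square)
  also have "rh * (R1 - R2) + mu * (R1 * R2) = rh * (- (2 * mu / sg\<^sup>2)) + mu * (2 * rh / sg\<^sup>2)"
    using R2_minus_R1 R1R2 by (simp add: algebra_simps)
  also have "\<dots> = 0" by (simp add: field_simps)
  finally show ?thesis by simp
qed

lemma E_deriv: "(E has_real_derivative E1 y) (at y)"
  unfolding E_def E1_def
  by (auto intro!: derivative_eq_intros simp: algebra_simps)

lemma E1_deriv: "(E1 has_real_derivative E2 y) (at y)"
  unfolding E2_def E1_def
  by (auto intro!: derivative_eq_intros simp: algebra_simps power2_eq_square)

lemma E_ode: "1/2 * sg\<^sup>2 * E2 y + mu * E1 y - rh * E y = 0"
proof -
  have "1/2 * sg\<^sup>2 * E2 y + mu * E1 y - rh * E y =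
     kap * exp (R1 * y) * (sg\<^sup>2 * R1\<^sup>2 / 2 + mu * R1 - rh)
   - kap * exp (- R2 * y) * (sg\<^sup>2 * R2\<^sup>2 / 2 - mu * R2 - rh)"
    unfolding E_def E1_def E2_def by (simp add: algebra_simps)
  thus ?thesis using quad1 quad2 by simp
qed

end

lemma deriv_pw:
  fixes f g f' g' :: "real \<Rightarrow> real" and c x :: real
  assumes df: "\<And>x. (f has_real_derivative f' x) (at x)"
    and dg: "\<And>x. (g has_real_derivative g' x) (at x)"
    and e0: "f c = g c" and e1: "f' c = g' c"
  shows "((\<lambda>x. if x \<le> c then f x else g x) has_real_derivative (if x \<le> c then f' x else g' x)) (at x)"
proof -
  have cl: "closure {..c} \<inter> closure {c<..} = {c}" by auto
  have A: "{..c} \<union> (closure {..c} \<inter> closure {c<..}) = {..c}" unfolding cl by auto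
  have B: "{c<..} \<union> (closure {..c} \<inter> closure {c<..}) = {c..}" unfolding cl by auto
  have "((\<lambda>x. if x \<in> {..c} then f x else g x) has_derivative
      (if x \<in> {..c} then (*) (f' x) else (*) (g' x))) (at x within ({..c} \<union> {c<..}))"
  proof (rule has_derivative_If_within_closures)
    show "(f has_derivative (*) (f' x)) (at x within {..c} \<union> (closure {..c} \<inter> closure {c<..}))"
      if "x \<in> {..c} \<union> (closure {..c} \<inter> closure {c<..})"
      using df[of x] by (simp add: has_field_derivative_def has_derivative_at_withinI)
    show "(g has_derivative (*) (g' x)) (at x within {c<..} \<union> (closure {..c} \<inter> closure {c<..}))"
      if "x \<in> {c<..} \<union> (closure {..c} \<inter> closure {c<..})"
      using dg[of x] by (simp add: has_field_derivative_def has_derivative_at_withinI)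
    show "f x = g x" if "x \<in> closure {..c}" "x \<in> closure {c<..}" using that cl e0 by auto
    show "(*) (f' x) = (*) (g' x)" if "x \<in> closure {..c}" "x \<in> closure {c<..}" using that cl e1 by auto
    show "x \<in> {..c} \<union> {c<..}" by auto
  qed
  moreover have "{..c} \<union> {c<..} = (UNIV :: real set)" by auto
  ultimately show ?thesis
    by (simp add: has_field_derivative_def if_distrib[of "(*)"] cong: if_cong)
qed

context prm
begin

lemma uniq:
  fixes V0 V0' V0'' :: "real \<Rightarrow> real"
  assumes d1: "\<And>x. (V0 has_real_derivative V0' x) (at x)"
    and d2: "\<And>x. (V0' has_real_derivative V0'' x) (at x)"
    and ode: "\<And>x. 1/2 * sg\<^sup>2 * V0'' x + mu * V0' x - rh * V0 x = 0"
    and i0: "V0 U0 = mu / rh" and i1: "V0' U0 = 1"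
  shows "V0 = E"
proof -
  define Z where "Z y = (V0' y - E1 y) + R2 * (V0 y - E y)" for y
  have V2: "V0'' y = 2 * (rh * V0 y - mu * V0' y) / sg\<^sup>2" for y
    using ode[of y] sg by (simp add: field_simps)
  have E2e: "E2 y = 2 * (rh * E y - mu * E1 y) / sg\<^sup>2" for y
    using E_ode[of y] sg by (simp add: field_simps)
  have R1e: "R1 = R2 - 2 * mu / sg\<^sup>2" using R2_minus_R1 by simp
  have Zd: "(Z has_real_derivative R1 * Z y) (at y)" for y
  proof -
    have "(Z has_real_derivative (V0'' y - E2 y) + R2 * (V0' y - E1 y)) (at y)"
      unfolding Z_def[abs_def] using d1 d2 E_deriv E1_deriv
      by (auto intro!: derivative_eq_intros)
    moreover have "(V0'' y - E2 y) + R2 * (V0' y - E1 y) = R1 * Z y"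
    proof -
      have "(V0'' y - E2 y) + R2 * (V0' y - E1 y)
          = (R2 - 2 * mu / sg\<^sup>2) * (V0' y - E1 y) + (2 * rh / sg\<^sup>2) * (V0 y - E y)"
        unfolding V2 E2e using sg by (simp add: field_simps)
      also have "\<dots> = R1 * Z y" unfolding Z_def R1e[symmetric] R1R2[symmetric]
        by (simp add: algebra_simps)
      finally show ?thesis .
    qed
    ultimately show ?thesis by simp
  qed
  have GD: "\<forall>t. ((\<lambda>y. Z y * exp (- R1 * y)) has_real_derivative 0) (at t)"
  proof
    fix t
    have "((\<lambda>y. Z y * exp (- R1 * y)) has_real_derivative
        R1 * Z t * exp (- R1 * t) + Z t * (exp (- R1 * t) * (- R1))) (at t)"
      by (auto intro!: derivative_eq_intros Zd)
    thus "((\<lambda>y. Z y * exp (- R1 * y)) has_real_derivative 0) (at t)" by (simp add: algebra_simps)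
  qed
  have G0: "Z y * exp (- R1 * y) = Z U0 * exp (- R1 * U0)" for y
    using DERIV_isconst_all[OF GD] .
  have ZU0: "Z U0 = 0" unfolding Z_def using i0 i1 E_U0 E1_U0 by simp
  have Z0: "Z y = 0" for y using G0[of y] ZU0 by simp
  have HD: "\<forall>t. ((\<lambda>y. (V0 y - E y) * exp (R2 * y)) has_real_derivative 0) (at t)"
  proof
    fix t
    have "((\<lambda>y. (V0 y - E y) * exp (R2 * y)) has_real_derivative
        (V0' t - E1 t) * exp (R2 * t) + (V0 t - E t) * (exp (R2 * t) * R2)) (at t)"
      using d1 E_deriv by (auto intro!: derivative_eq_intros)
    moreover have "(V0' t - E1 t) * exp (R2 * t) + (V0 t - E t) * (exp (R2 * t) * R2) = Z t * exp (R2 * t)"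
      unfolding Z_def by (simp add: algebra_simps)
    ultimately show "((\<lambda>y. (V0 y - E y) * exp (R2 * y)) has_real_derivative 0) (at t)" using Z0 by simp
  qed
  have H0: "(V0 y - E y) * exp (R2 * y) = (V0 U0 - E U0) * exp (R2 * U0)" for y
    using DERIV_isconst_all[OF HD] .
  show ?thesis
  proof (rule ext)
    fix y show "V0 y = E y" using H0[of y] i0 E_U0 by simp
  qed
qed

end

context prm
begin

lemma E2_mono: "y \<le> z \<Longrightarrow> E2 y \<le> E2 z"
proof -
  assume yz: "y \<le> z"
  have a: "exp (R1 * y) \<le> exp (R1 * z)" using yz R1_pos by simp
  have b: "exp (- R2 * z) \<le> exp (- R2 * y)" using yz R2_pos by simp
  have "R1\<^sup>2 * exp (R1 * y) - R2\<^sup>2 * exp (- R2 * y) \<le> R1\<^sup>2 * exp (R1 * z) - R2\<^sup>2 * exp (- R2 * z)"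
    using mult_left_mono[OF a, of "R1\<^sup>2"] mult_left_mono[OF b, of "R2\<^sup>2"] by simp
  thus ?thesis unfolding E2_def using kap_pos by (simp add: mult_left_mono)
qed

lemma E2_le: "y \<le> U0 \<Longrightarrow> E2 y \<le> 0"
  using E2_mono[of y U0] E2_U0 by simp

lemma E2_ge: "y \<ge> U0 \<Longrightarrow> E2 y \<ge> 0"
  using E2_mono[of U0 y] E2_U0 by simp

lemma E1_ge: "y \<le> U0 \<Longrightarrow> E1 y \<ge> 1"
proof -
  assume y: "y \<le> U0"
  have "E1 U0 \<le> E1 y"
    by (rule DERIV_nonpos_imp_nonincreasing[OF y]) (use E1_deriv E2_le in blast)
  thus ?thesis using E1_U0 by simp
qed

lemma E1_pos: "E1 y > 0"
  unfolding E1_def using kap_pos R1_pos R2_pos by (simp add: add_pos_pos)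

definition "Lf y = y - U0 + mu / rh"
definition "Uf y = (if y \<le> U0 then E y else Lf y)"

lemma E_le_L: "y \<le> U0 \<Longrightarrow> E y \<le> Lf y"
proof -
  assume y: "y \<le> U0"
  have d: "((\<lambda>t. E t - Lf t) has_real_derivative E1 t - 1) (at t)" for t
    unfolding Lf_def by (auto intro!: derivative_eq_intros E_deriv)
  have "(\<lambda>t. E t - Lf t) y \<le> (\<lambda>t. E t - Lf t) U0"
    by (rule DERIV_nonneg_imp_nondecreasing[OF y]) (use d E1_ge in force)
  thus ?thesis using E_U0 unfolding Lf_def by simp
qed

lemma L_le_E: "y \<ge> U0 \<Longrightarrow> Lf y \<le> E y"
proof -
  assume y: "y \<ge> U0"
  have E1g: "E1 t \<ge> 1" if "t \<ge> U0" for t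
  proof -
    have "E1 U0 \<le> E1 t"
      by (rule DERIV_nonneg_imp_nondecreasing[OF that]) (use E1_deriv E2_ge in blast)
    thus ?thesis using E1_U0 by simp
  qed
  have d: "((\<lambda>t. E t - Lf t) has_real_derivative E1 t - 1) (at t)" for t
    unfolding Lf_def by (auto intro!: derivative_eq_intros E_deriv)
  have "(\<lambda>t. E t - Lf t) U0 \<le> (\<lambda>t. E t - Lf t) y"
    by (rule DERIV_nonneg_imp_nondecreasing[OF y]) (use d E1g in force)
  thus ?thesis using E_U0 unfolding Lf_def by simp
qed

lemma Uf_min: "Uf y = min (E y) (Lf y)"
  unfolding Uf_def min_def using E_le_L[of y] L_le_E[of y] by auto

definition "Uf1 t = (if t \<le> U0 then E1 t else 1)"
definition "Uf2 t = (if t \<le> U0 then E2 t else 0)"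

lemma L_deriv: "(Lf has_real_derivative 1) (at t)"
  unfolding Lf_def by (auto intro!: derivative_eq_intros)

lemma c0_deriv: "((\<lambda>_. 0::real) has_real_derivative 0) (at t)" by simp
lemma c1_deriv: "((\<lambda>_. 1::real) has_real_derivative 0) (at t)" by simp

lemma Uf_deriv: "(Uf has_real_derivative Uf1 t) (at t)"
proof -
  have "((\<lambda>x. if x \<le> U0 then E x else Lf x) has_real_derivative (if t \<le> U0 then E1 t else 1)) (at t)"
    by (rule deriv_pw[of E E1 Lf "\<lambda>_. 1"]) (use E_deriv L_deriv E_U0 E1_U0 in \<open>auto simp: Lf_def\<close>)
  thus ?thesis unfolding Uf_def[abs_def] Uf1_def .
qed

lemma Uf1_deriv: "(Uf1 has_real_derivative Uf2 t) (at t)"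
proof -
  have "((\<lambda>x. if x \<le> U0 then E1 x else 1) has_real_derivative (if t \<le> U0 then E2 t else 0)) (at t)"
    by (rule deriv_pw[of E1 E2 "\<lambda>_. 1" "\<lambda>_. 0"]) (use E1_deriv c1_deriv E1_U0 E2_U0 in auto)
  thus ?thesis unfolding Uf1_def[abs_def] Uf2_def .
qed

lemma Uf2_alt: "Uf2 t = E2 (min t U0)"
  unfolding Uf2_def using E2_U0 by (auto simp: min_def)

lemma Uf2_cont: "continuous_on A Uf2"
  unfolding Uf2_alt[abs_def] E2_def by (intro continuous_intros)

lemma Uf_cont: "continuous_on A Uf"
  using Uf_deriv by (meson DERIV_isCont continuous_at_imp_continuous_on)

lemma Uf_minus_id_mono: "0 \<le> y \<Longrightarrow> y \<le> z \<Longrightarrow> Uf y - y \<le> Uf z - z"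
proof -
  assume yz: "0 \<le> y" "y \<le> z"
  have d: "((\<lambda>t. Uf t - t) has_real_derivative (if t \<le> U0 then E1 t else 1) - 1) (at t)" for t
    using Uf_deriv[of t] unfolding Uf1_def by (auto intro!: derivative_eq_intros)
  have nn: "0 \<le> (if t \<le> U0 then E1 t else 1) - 1" for t
    using E1_ge[of t] by auto
  have "(\<lambda>t. Uf t - t) y \<le> (\<lambda>t. Uf t - t) z"
    by (rule DERIV_nonneg_imp_nondecreasing[OF yz(2)]) (use d nn in blast)
  thus ?thesis by simp
qed

lemma Uf_minus_id_le: "0 \<le> y \<Longrightarrow> Uf y - y \<le> mu / rh - U0"
proof -
  assume y: "0 \<le> y"
  show ?thesis
  proof (cases "y \<le> U0")
    case True
    then have "Uf y - y \<le> Uf U0 - U0" using Uf_minus_id_mono y by blast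
    thus ?thesis unfolding Uf_def using E_U0 by simp
  next
    case False thus ?thesis unfolding Uf_def Lf_def by simp
  qed
qed

lemma Uf_ge_id: "0 \<le> y \<Longrightarrow> Uf y \<ge> y"
  using Uf_minus_id_mono[of 0 y] E_0 U0_pos unfolding Uf_def by simp

lemma Uf_pos: "0 < y \<Longrightarrow> Uf y > 0" using Uf_ge_id[of y] by simp

lemma Uf_nonpos: "y \<le> 0 \<Longrightarrow> Uf y \<le> 0"
proof -
  assume y: "y \<le> 0"
  have "E y \<le> E 0"
    by (rule DERIV_nonneg_imp_nondecreasing[OF y]) (use E_deriv E1_pos less_imp_le in blast)
  thus ?thesis using E_0 U0_pos y unfolding Uf_def by simp
qed

definition "phi u = kap * (exp (R2 * u) - exp (- R1 * u))"

lemma Uf_neg: "y \<le> 0 \<Longrightarrow> - Uf y = phi (- y)"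
  using U0_pos unfolding Uf_def E_def phi_def by (simp add: algebra_simps)

lemma phi_mono: "u \<le> v \<Longrightarrow> phi u \<le> phi v"
proof -
  assume yz: "u \<le> v"
  have a: "exp (R2 * u) \<le> exp (R2 * v)" using yz R2_pos by simp
  have b: "exp (- R1 * v) \<le> exp (- R1 * u)" using yz R1_pos by simp
  have c: "exp (R2 * u) - exp (- R1 * u) \<le> exp (R2 * v) - exp (- R1 * v)" using a b by linarith
  show ?thesis unfolding phi_def using kap_pos c by (simp add: mult_left_mono)
qed

lemma phi_le: "phi u \<le> kap * exp (R2 * u)"
  unfolding phi_def using kap_pos by (simp add: mult_left_mono)

lemma phi_0: "phi 0 = 0" unfolding phi_def by simp

lemma phi_cont: "isCont phi x" unfolding phi_def by (intro continuous_intros)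

lemma phi_small: "e > 0 \<Longrightarrow> \<exists>a>0. phi a < e"
proof -
  assume e: "e > 0"
  have "(phi \<longlongrightarrow> phi 0) (at 0)" using phi_cont[of 0] unfolding isCont_def .
  hence "(phi \<longlongrightarrow> 0) (at 0)" unfolding phi_0 .
  then have "\<forall>\<^sub>F a in at 0. phi a < e" using e by (rule order_tendstoD(2))
  then obtain d where d: "d > 0" "\<And>x. x \<noteq> 0 \<Longrightarrow> dist x 0 < d \<Longrightarrow> phi x < e"
    unfolding eventually_at by auto
  show ?thesis using d by (intro exI[of _ "d/2"]) auto
qed

lemma Uf_borel[measurable]: "Uf \<in> borel_measurable borel"
  by (rule borel_measurable_continuous_onI) (rule Uf_cont)

end

definition Nm :: "real \<Rightarrow> real measure" where
  "Nm s = density lborel (normal_density 0 s)"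

lemma Nm_prob: "s > 0 \<Longrightarrow> prob_space (Nm s)"
  unfolding Nm_def by (rule prob_space_normal_density)

lemma sets_Nm[simp, measurable_cong]: "sets (Nm s) = sets borel"
  unfolding Nm_def by simp

lemma space_Nm[simp]: "space (Nm s) = UNIV"
  unfolding Nm_def by simp

lemma nd_shift:
  assumes s: "s > 0"
  shows "normal_density 0 s z * exp (t * z) = exp (t\<^sup>2 * s\<^sup>2 / 2) * normal_density (t * s\<^sup>2) s z"
proof -
  have "- (z - 0)\<^sup>2 / (2 * s\<^sup>2) + t * z = t\<^sup>2 * s\<^sup>2 / 2 + - (z - t * s\<^sup>2)\<^sup>2 / (2 * s\<^sup>2)"
    using s by (simp add: field_simps power2_eq_square)
  hence "exp (- (z - 0)\<^sup>2 / (2 * s\<^sup>2)) * exp (t * z) = exp (t\<^sup>2 * s\<^sup>2 / 2) * exp (- (z - t * s\<^sup>2)\<^sup>2 / (2 * s\<^sup>2))"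
    by (simp add: exp_add[symmetric])
  thus ?thesis unfolding normal_density_def by (simp add: algebra_simps)
qed

lemma mgf_lborel:
  assumes s: "s > 0"
  shows "has_bochner_integral lborel (\<lambda>z. normal_density 0 s z * exp (t * z)) (exp (t\<^sup>2 * s\<^sup>2 / 2))"
proof -
  have "has_bochner_integral lborel (normal_density (t * s\<^sup>2) s) 1"
    using s by (simp add: has_bochner_integral_iff)
  hence "has_bochner_integral lborel (\<lambda>z. exp (t\<^sup>2 * s\<^sup>2 / 2) * normal_density (t * s\<^sup>2) s z) (exp (t\<^sup>2 * s\<^sup>2 / 2) * 1)"
    by (rule has_bochner_integral_mult_right)
  thus ?thesis using nd_shift[OF s] by simp
qed

lemma mgf:
  assumes s: "s > 0"
  shows "has_bochner_integral (Nm s) (\<lambda>z. exp (t * z)) (exp (t\<^sup>2 * s\<^sup>2 / 2))"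
  unfolding Nm_def
  by (rule has_bochner_integral_density) (use mgf_lborel[OF s] in auto)

lemma mean0:
  assumes s: "s > 0"
  shows "has_bochner_integral (Nm s) (\<lambda>z. z) 0"
  unfolding Nm_def
  by (rule has_bochner_integral_density) (use normal_moment_nz_1[OF s, of 0] in auto)

lemma one_int:
  assumes s: "s > 0"
  shows "has_bochner_integral (Nm s) (\<lambda>z. 1) (1::real)"
proof -
  interpret prob_space "Nm s" by (rule Nm_prob[OF s])
  have "prob UNIV = 1" using prob_space by simp
  thus ?thesis by (simp add: has_bochner_integral_iff)
qed

lemma mgf_aff:
  assumes s: "s > 0"
  shows "has_bochner_integral (Nm s) (\<lambda>z. exp (c * (m + b * z))) (exp (c * m + c\<^sup>2 * b\<^sup>2 * s\<^sup>2 / 2))"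
proof -
  have "has_bochner_integral (Nm s) (\<lambda>z. exp (c * m) * exp ((c * b) * z)) (exp (c * m) * exp ((c * b)\<^sup>2 * s\<^sup>2 / 2))"
    by (rule has_bochner_integral_mult_right) (rule mgf[OF s])
  moreover have "exp (c * m) * exp ((c * b) * z) = exp (c * (m + b * z))" for z
    by (simp add: exp_add[symmetric] algebra_simps)
  moreover have "exp (c * m) * exp ((c * b)\<^sup>2 * s\<^sup>2 / 2) = exp (c * m + c\<^sup>2 * b\<^sup>2 * s\<^sup>2 / 2)"
    by (simp add: exp_add[symmetric] power_mult_distrib)
  ultimately show ?thesis by simp
qed

lemma pow4_le_exp: "0 \<le> v \<Longrightarrow> v ^ 4 \<le> 256 * exp (v::real)"
proof -
  assume v: "0 \<le> v"
  have "(v / 4) ^ 4 \<le> (1 + v / 4) ^ 4" using v by (intro power_mono) auto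
  also have "\<dots> \<le> exp (v / 4) ^ 4" using v by (intro power_mono) auto
  also have "\<dots> = exp v" by (simp add: exp_of_nat_mult[symmetric])
  finally show ?thesis by (simp add: power_divide)
qed

context prm
begin

lemma int_E:
  assumes h: "h > 0"
  shows "has_bochner_integral (Nm (sqrt h)) (\<lambda>z. exp (- rh * h) * E (y + mu * h + sg * z)) (E y)"
proof -
  have s: "sqrt h > 0" using h by simp
  have A: "has_bochner_integral (Nm (sqrt h)) (\<lambda>z. exp (R1 * ((y + mu * h) + sg * z)))
      (exp (R1 * (y + mu * h) + R1\<^sup>2 * sg\<^sup>2 * (sqrt h)\<^sup>2 / 2))" by (rule mgf_aff[OF s])
  have B: "has_bochner_integral (Nm (sqrt h)) (\<lambda>z. exp ((- R2) * ((y + mu * h) + sg * z)))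
      (exp ((- R2) * (y + mu * h) + (- R2)\<^sup>2 * sg\<^sup>2 * (sqrt h)\<^sup>2 / 2))" by (rule mgf_aff[OF s])
  have eA: "exp (- rh * h) * exp (R1 * (y + mu * h) + R1\<^sup>2 * sg\<^sup>2 * (sqrt h)\<^sup>2 / 2) = exp (R1 * y)"
  proof -
    have "- rh * h + (R1 * (y + mu * h) + R1\<^sup>2 * sg\<^sup>2 * (sqrt h)\<^sup>2 / 2) = R1 * y + h * (sg\<^sup>2 * R1\<^sup>2 / 2 + mu * R1 - rh)"
      using h by (simp add: algebra_simps)
    thus ?thesis using quad1 by (simp add: exp_add[symmetric])
  qed
  have eB: "exp (- rh * h) * exp ((- R2) * (y + mu * h) + (- R2)\<^sup>2 * sg\<^sup>2 * (sqrt h)\<^sup>2 / 2) = exp (- R2 * y)"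
  proof -
    have "- rh * h + ((- R2) * (y + mu * h) + (- R2)\<^sup>2 * sg\<^sup>2 * (sqrt h)\<^sup>2 / 2) = - R2 * y + h * (sg\<^sup>2 * R2\<^sup>2 / 2 - mu * R2 - rh)"
      using h by (simp add: algebra_simps)
    thus ?thesis using quad2 by (simp add: exp_add[symmetric])
  qed
  have X: "has_bochner_integral (Nm (sqrt h))
     (\<lambda>z. exp (- rh * h) * kap * (exp (R1 * ((y + mu * h) + sg * z)) - exp ((- R2) * ((y + mu * h) + sg * z))))
     (exp (- rh * h) * kap * (exp (R1 * (y + mu * h) + R1\<^sup>2 * sg\<^sup>2 * (sqrt h)\<^sup>2 / 2) - exp ((- R2) * (y + mu * h) + (- R2)\<^sup>2 * sg\<^sup>2 * (sqrt h)\<^sup>2 / 2)))"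
    by (intro has_bochner_integral_mult_right has_bochner_integral_diff A B)
  have V: "exp (- rh * h) * kap * (exp (R1 * (y + mu * h) + R1\<^sup>2 * sg\<^sup>2 * (sqrt h)\<^sup>2 / 2) - exp ((- R2) * (y + mu * h) + (- R2)\<^sup>2 * sg\<^sup>2 * (sqrt h)\<^sup>2 / 2)) = E y"
  proof -
    have "exp (- rh * h) * kap * (exp (R1 * (y + mu * h) + R1\<^sup>2 * sg\<^sup>2 * (sqrt h)\<^sup>2 / 2) - exp ((- R2) * (y + mu * h) + (- R2)\<^sup>2 * sg\<^sup>2 * (sqrt h)\<^sup>2 / 2))
      = kap * (exp (- rh * h) * exp (R1 * (y + mu * h) + R1\<^sup>2 * sg\<^sup>2 * (sqrt h)\<^sup>2 / 2) - exp (- rh * h) * exp ((- R2) * (y + mu * h) + (- R2)\<^sup>2 * sg\<^sup>2 * (sqrt h)\<^sup>2 / 2))"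
      by (simp only: algebra_simps)
    also have "\<dots> = kap * (exp (R1 * y) - exp (- R2 * y))" by (simp only: eA eB)
    finally show ?thesis unfolding E_def .
  qed
  have F: "(\<lambda>z. exp (- rh * h) * E (y + mu * h + sg * z)) = (\<lambda>z. exp (- rh * h) * kap * (exp (R1 * ((y + mu * h) + sg * z)) - exp ((- R2) * ((y + mu * h) + sg * z))))"
    by (rule ext) (simp add: E_def algebra_simps)
  show ?thesis using X unfolding F V .
qed

lemma int_L:
  assumes h: "h > 0"
  shows "has_bochner_integral (Nm (sqrt h)) (\<lambda>z. exp (- rh * h) * Lf (y + mu * h + sg * z)) (exp (- rh * h) * (Lf y + mu * h))"
proof -
  have s: "sqrt h > 0" using h by simp
  have "has_bochner_integral (Nm (sqrt h)) (\<lambda>z. exp (- rh * h) * ((Lf y + mu * h) * 1 + sg * z))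
      (exp (- rh * h) * ((Lf y + mu * h) * 1 + sg * 0))"
    by (intro has_bochner_integral_mult_right has_bochner_integral_add one_int[OF s] mean0[OF s])
  thus ?thesis unfolding Lf_def by (simp add: algebra_simps)
qed

lemma int_Uf:
  assumes h: "h > 0"
  shows "integrable (Nm (sqrt h)) (\<lambda>z. exp (- rh * h) * Uf (y + mu * h + sg * z))"
proof (rule Bochner_Integration.integrable_bound)
  show "integrable (Nm (sqrt h)) (\<lambda>z. \<bar>exp (- rh * h) * E (y + mu * h + sg * z)\<bar> + \<bar>exp (- rh * h) * Lf (y + mu * h + sg * z)\<bar>)"
    using integrable.intros[OF int_E[OF h, of y]] integrable.intros[OF int_L[OF h, of y]]
    by simp
  show "(\<lambda>z. exp (- rh * h) * Uf (y + mu * h + sg * z)) \<in> borel_measurable (Nm (sqrt h))" by measurable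
  show "AE z in Nm (sqrt h). norm (exp (- rh * h) * Uf (y + mu * h + sg * z)) \<le>
      norm (\<bar>exp (- rh * h) * E (y + mu * h + sg * z)\<bar> + \<bar>exp (- rh * h) * Lf (y + mu * h + sg * z)\<bar>)"
    unfolding Uf_def by (auto simp: abs_mult)
qed

lemma supermart:
  assumes h: "h > 0"
  shows "(\<integral>z. exp (- rh * h) * Uf (y + mu * h + sg * z) \<partial>Nm (sqrt h)) \<le> Uf y"
proof (cases "y \<le> U0")
  case True
  have "(\<integral>z. exp (- rh * h) * Uf (y + mu * h + sg * z) \<partial>Nm (sqrt h)) \<le> (\<integral>z. exp (- rh * h) * E (y + mu * h + sg * z) \<partial>Nm (sqrt h))"
    by (rule integral_mono[OF int_Uf[OF h] integrable.intros[OF int_E[OF h]]]) (intro mult_left_mono, auto simp: Uf_min)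
  also have "\<dots> = E y" using int_E[OF h] by (rule has_bochner_integral_integral_eq)
  finally show ?thesis using True unfolding Uf_def by simp
next
  case False
  have "(\<integral>z. exp (- rh * h) * Uf (y + mu * h + sg * z) \<partial>Nm (sqrt h)) \<le> (\<integral>z. exp (- rh * h) * Lf (y + mu * h + sg * z) \<partial>Nm (sqrt h))"
    by (rule integral_mono[OF int_Uf[OF h] integrable.intros[OF int_L[OF h]]]) (intro mult_left_mono, auto simp: Uf_min)
  also have "\<dots> = exp (- rh * h) * (Lf y + mu * h)" using int_L[OF h] by (rule has_bochner_integral_integral_eq)
  also have "\<dots> \<le> Lf y"
  proof -
    have L: "Lf y \<ge> mu / rh" using False unfolding Lf_def by simp
    hence "rh * Lf y \<ge> mu" using rh by (simp add: field_simps)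
    have "Lf y + mu * h \<le> Lf y * (1 + rh * h)"
      using \<open>rh * Lf y \<ge> mu\<close> h by (simp add: algebra_simps mult_right_mono)
    also have "\<dots> \<le> Lf y * exp (rh * h)"
      using L mu rh by (intro mult_left_mono) (auto intro: order_trans[OF _ L])
    finally have "Lf y + mu * h \<le> Lf y * exp (rh * h)" .
    hence "exp (- rh * h) * (Lf y + mu * h) \<le> exp (- rh * h) * (Lf y * exp (rh * h))"
      by (intro mult_left_mono) auto
    also have "\<dots> = Lf y" by (simp add: exp_minus field_simps)
    finally show ?thesis .
  qed
  finally show ?thesis using False unfolding Uf_def by simp
qed

lemma supermart_nn:
  assumes h: "h > 0"
  shows "(\<integral>\<^sup>+ z. ennreal (exp (- rh * h) * Uf (y + mu * h + sg * z)) \<partial>Nm (sqrt h))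
     \<le> ennreal (Uf y) + (\<integral>\<^sup>+ z. ennreal (- Uf (y + mu * h + sg * z)) \<partial>Nm (sqrt h))"
proof -
  define f where "f z = exp (- rh * h) * Uf (y + mu * h + sg * z)" for z
  have fi: "integrable (Nm (sqrt h)) f" unfolding f_def by (rule int_Uf[OF h])
  have fp: "integrable (Nm (sqrt h)) (\<lambda>z. max (f z) 0)" using fi by (intro integrable_max) auto
  have fm: "integrable (Nm (sqrt h)) (\<lambda>z. max (- f z) 0)" using fi by (intro integrable_max) auto
  have "(\<integral>\<^sup>+ z. ennreal (f z) \<partial>Nm (sqrt h)) = (\<integral>\<^sup>+ z. ennreal (max (f z) 0) \<partial>Nm (sqrt h))"
    by (intro nn_integral_cong) (auto simp: max_def ennreal_neg)
  also have "\<dots> = ennreal (\<integral>z. max (f z) 0 \<partial>Nm (sqrt h))"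
    by (rule nn_integral_eq_integral[OF fp]) auto
  also have "(\<integral>z. max (f z) 0 \<partial>Nm (sqrt h)) = (\<integral>z. f z \<partial>Nm (sqrt h)) + (\<integral>z. max (- f z) 0 \<partial>Nm (sqrt h))"
  proof -
    have "(\<integral>z. max (f z) 0 \<partial>Nm (sqrt h)) = (\<integral>z. f z + max (- f z) 0 \<partial>Nm (sqrt h))"
      by (intro Bochner_Integration.integral_cong) auto
    also have "\<dots> = (\<integral>z. f z \<partial>Nm (sqrt h)) + (\<integral>z. max (- f z) 0 \<partial>Nm (sqrt h))"
      by (rule Bochner_Integration.integral_add[OF fi fm])
    finally show ?thesis .
  qed
  also have "ennreal ((\<integral>z. f z \<partial>Nm (sqrt h)) + (\<integral>z. max (- f z) 0 \<partial>Nm (sqrt h)))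
      \<le> ennreal (max (Uf y) 0 + (\<integral>z. max (- f z) 0 \<partial>Nm (sqrt h)))"
    by (rule ennreal_leI) (use supermart[OF h, of y] in \<open>simp add: f_def\<close>)
  also have "\<dots> = ennreal (max (Uf y) 0) + ennreal (\<integral>z. max (- f z) 0 \<partial>Nm (sqrt h))"
    by (intro ennreal_plus) (auto intro!: integral_nonneg_AE)
  also have "ennreal (max (Uf y) 0) = ennreal (Uf y)" by (auto simp: max_def ennreal_neg)
  also have "ennreal (\<integral>z. max (- f z) 0 \<partial>Nm (sqrt h)) = (\<integral>\<^sup>+ z. ennreal (max (- f z) 0) \<partial>Nm (sqrt h))"
    by (rule nn_integral_eq_integral[OF fm, symmetric]) auto
  also have "\<dots> \<le> (\<integral>\<^sup>+ z. ennreal (- Uf (y + mu * h + sg * z)) \<partial>Nm (sqrt h))"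
  proof (intro nn_integral_mono)
    fix z
    have "max (- f z) 0 \<le> max (- Uf (y + mu * h + sg * z)) 0"
    proof (cases "Uf (y + mu * h + sg * z) \<ge> 0")
      case True thus ?thesis unfolding f_def by (simp add: max_def)
    next
      case False
      have "exp (- rh * h) \<le> 1" using rh h by simp
      hence "exp (- rh * h) * (- Uf (y + mu * h + sg * z)) \<le> 1 * (- Uf (y + mu * h + sg * z))"
        using False by (intro mult_right_mono) auto
      thus ?thesis unfolding f_def by (simp add: max_def)
    qed
    hence "ennreal (max (- f z) 0) \<le> ennreal (max (- Uf (y + mu * h + sg * z)) 0)" by (rule ennreal_leI)
    moreover have "ennreal (max (- Uf (y + mu * h + sg * z)) 0) = ennreal (- Uf (y + mu * h + sg * z))"
      by (auto simp: max_def ennreal_neg)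
    ultimately show "ennreal (max (- f z) 0) \<le> ennreal (- Uf (y + mu * h + sg * z))" by simp
  qed
  finally show ?thesis unfolding f_def by (simp add: add_mono)
qed

end

context prm
begin

definition Yd :: "real \<Rightarrow> real \<Rightarrow> nat \<Rightarrow> (nat \<Rightarrow> real) \<Rightarrow> real" where
  "Yd h x k d = x + (\<Sum>i<k. mu * h + sg * d i)"
definition Ad :: "real \<Rightarrow> real \<Rightarrow> nat \<Rightarrow> (nat \<Rightarrow> real) \<Rightarrow> real" where
  "Ad h x k d = (\<Prod>j\<in>{..k}. if 0 < Yd h x j d then 1 else (0::real))"
definition PN :: "real \<Rightarrow> nat \<Rightarrow> (nat \<Rightarrow> real) measure" where "PN h m = PiM {..<m} (\<lambda>_::nat. Nm (sqrt h))"
definition "Qd h x k = (\<integral>\<^sup>+ d. ennreal (Ad h x k d * exp (- rh * h * k) * Uf (Yd h x k d)) \<partial>PN h k)"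
definition "Er h x k = (\<integral>\<^sup>+ d. ennreal (Ad h x k d * (- Uf (Yd h x (Suc k) d))) \<partial>PN h (Suc k))"

lemma Yd_upd: "j \<le> k \<Longrightarrow> Yd h x j (d(k := z)) = Yd h x j d"
proof -
  assume jk: "j \<le> k"
  have "(\<Sum>i<j. mu * h + sg * (d(k := z)) i) = (\<Sum>i<j. mu * h + sg * d i)"
    by (rule sum.cong) (use jk in auto)
  thus ?thesis unfolding Yd_def by simp
qed

lemma Yd_Suc: "Yd h x (Suc k) d = Yd h x k d + (mu * h + sg * d k)"
  unfolding Yd_def by simp

lemma Ad_upd: "Ad h x k (d(k := z)) = Ad h x k d"
  unfolding Ad_def by (intro prod.cong) (auto simp: Yd_upd)

lemma Ad_Suc: "Ad h x (Suc k) d = Ad h x k d * (if 0 < Yd h x (Suc k) d then 1 else 0)"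
  unfolding Ad_def by (simp add: atMost_Suc)

lemma Ad_01: "Ad h x k d = 0 \<or> Ad h x k d = 1"
  by (induction k) (auto simp: Ad_def atMost_Suc)

lemma Ad_1: "Ad h x k d \<noteq> 0 \<Longrightarrow> 0 < Yd h x k d"
  unfolding Ad_def by (subst (asm) prod_zero_iff) (auto split: if_splits simp: Ball_def)

lemma Ad_nonneg: "0 \<le> Ad h x k d" using Ad_01[of h x k d] by auto

lemma Yd_meas: "j \<le> m \<Longrightarrow> (\<lambda>d. Yd h x j d) \<in> borel_measurable (PN h m)"
  unfolding Yd_def PN_def
  by (intro borel_measurable_add borel_measurable_const borel_measurable_sum borel_measurable_times
        measurable_compose[OF measurable_component_singleton]) (auto simp: measurable_ident_sets)

lemma Ad_meas: "k \<le> m \<Longrightarrow> (\<lambda>d. Ad h x k d) \<in> borel_measurable (PN h m)"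
proof -
  assume km: "k \<le> m"
  have "(\<lambda>d. if 0 < Yd h x j d then 1 else (0::real)) \<in> borel_measurable (PN h m)" if "j \<in> {..k}" for j
  proof -
    have j: "j \<le> m" using that km by auto
    show ?thesis
      by (rule measurable_If) (auto intro!: borel_measurable_less[OF borel_measurable_const Yd_meas[OF j]])
  qed
  then show ?thesis unfolding Ad_def by (intro borel_measurable_prod) auto
qed

lemma PN_emeasure: "h > 0 \<Longrightarrow> emeasure (PN h m) (space (PN h m)) = 1"
proof -
  assume h: "h > 0"
  have "prob_space (PN h m)" unfolding PN_def by (rule prob_space_PiM) (rule Nm_prob, simp add: h)
  thus ?thesis by (simp add: prob_space.emeasure_space_1)
qed

lemma Nm_emeasure: "h > 0 \<Longrightarrow> emeasure (Nm (sqrt h)) UNIV = 1"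
  using prob_space.emeasure_space_1[OF Nm_prob[of "sqrt h"]] by simp

lemma Q_0:
  assumes h: "h > 0" and x: "x > 0"
  shows "Qd h x 0 = ennreal (Uf x)"
proof -
  have "Qd h x 0 = (\<integral>\<^sup>+ d. ennreal (Uf x) \<partial>PN h 0)"
    unfolding Qd_def by (intro nn_integral_cong) (simp add: Ad_def Yd_def x)
  also have "\<dots> = ennreal (Uf x)" using PN_emeasure[OF h, of 0] by simp
  finally show ?thesis .
qed

lemma inner_bound:
  assumes h: "h > 0"
  shows "(\<integral>\<^sup>+ z. ennreal (Ad h x (Suc k) (d(k := z)) * exp (- rh * h * Suc k) * Uf (Yd h x (Suc k) (d(k := z)))) \<partial>Nm (sqrt h))
    \<le> (\<integral>\<^sup>+ z. ennreal (Ad h x k (d(k := z)) * exp (- rh * h * k) * Uf (Yd h x k (d(k := z))))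
          + ennreal (Ad h x k (d(k := z)) * (- Uf (Yd h x (Suc k) (d(k := z))))) \<partial>Nm (sqrt h))"
proof -
  define a where "a = Ad h x k d"
  define y where "y = Yd h x k d"
  define ek where "ek = exp (- rh * h * k)"
  have ek: "0 < ek" "ek \<le> 1" unfolding ek_def using rh h by auto
  have YS: "Yd h x (Suc k) (d(k := z)) = y + mu * h + sg * z" for z
    unfolding Yd_Suc y_def by (simp add: Yd_upd)
  have AS: "Ad h x (Suc k) (d(k := z)) = a * (if 0 < y + mu * h + sg * z then 1 else 0)" for z
    unfolding Ad_Suc a_def YS by (simp add: Ad_upd)
  have ekS: "exp (- rh * h * Suc k) = ek * exp (- rh * h)"
    unfolding ek_def by (simp add: exp_add[symmetric] algebra_simps)
  have L: "(\<integral>\<^sup>+ z. ennreal (Ad h x (Suc k) (d(k := z)) * exp (- rh * h * Suc k) * Uf (Yd h x (Suc k) (d(k := z)))) \<partial>Nm (sqrt h))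
      = (\<integral>\<^sup>+ z. ennreal (a * (if 0 < y + mu * h + sg * z then 1 else 0) * (ek * exp (- rh * h)) * Uf (y + mu * h + sg * z)) \<partial>Nm (sqrt h))"
    unfolding AS YS ekS ..
  have R: "(\<integral>\<^sup>+ z. ennreal (Ad h x k (d(k := z)) * exp (- rh * h * k) * Uf (Yd h x k (d(k := z))))
          + ennreal (Ad h x k (d(k := z)) * (- Uf (Yd h x (Suc k) (d(k := z))))) \<partial>Nm (sqrt h))
      = (\<integral>\<^sup>+ z. ennreal (a * ek * Uf y) + ennreal (a * (- Uf (y + mu * h + sg * z))) \<partial>Nm (sqrt h))"
    unfolding YS by (simp add: Ad_upd Yd_upd a_def y_def ek_def)
  show ?thesis
  proof (cases "a = 0")
    case True
    show ?thesis unfolding L R using True by simp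
  next
    case False
    hence a1: "a = 1" using Ad_01[of h x k d] unfolding a_def by auto
    have ypos: "0 < y" using Ad_1[of h x k d] False unfolding a_def y_def by auto
    have "(\<integral>\<^sup>+ z. ennreal (a * (if 0 < y + mu * h + sg * z then 1 else 0) * (ek * exp (- rh * h)) * Uf (y + mu * h + sg * z)) \<partial>Nm (sqrt h))
        = (\<integral>\<^sup>+ z. ennreal ek * ennreal (exp (- rh * h) * Uf (y + mu * h + sg * z)) \<partial>Nm (sqrt h))"
    proof (intro nn_integral_cong)
      fix z
      show "ennreal (a * (if 0 < y + mu * h + sg * z then 1 else 0) * (ek * exp (- rh * h)) * Uf (y + mu * h + sg * z))
          = ennreal ek * ennreal (exp (- rh * h) * Uf (y + mu * h + sg * z))"
      proof (cases "0 < y + mu * h + sg * z")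
        case True thus ?thesis using a1 ek by (simp add: ennreal_mult'[symmetric] algebra_simps)
      next
        case False
        hence "Uf (y + mu * h + sg * z) \<le> 0" using Uf_nonpos by simp
        hence "exp (- rh * h) * Uf (y + mu * h + sg * z) \<le> 0" by (simp add: mult_nonneg_nonpos)
        thus ?thesis using False by (simp add: ennreal_neg)
      qed
    qed
    also have "\<dots> = ennreal ek * (\<integral>\<^sup>+ z. ennreal (exp (- rh * h) * Uf (y + mu * h + sg * z)) \<partial>Nm (sqrt h))"
      by (rule nn_integral_cmult) measurable
    also have "\<dots> \<le> ennreal ek * (ennreal (Uf y) + (\<integral>\<^sup>+ z. ennreal (- Uf (y + mu * h + sg * z)) \<partial>Nm (sqrt h)))"
      by (intro mult_left_mono supermart_nn[OF h]) simp
    also have "\<dots> = ennreal (ek * Uf y) + ennreal ek * (\<integral>\<^sup>+ z. ennreal (- Uf (y + mu * h + sg * z)) \<partial>Nm (sqrt h))"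
      using ek by (simp add: distrib_left ennreal_mult')
    also have "\<dots> \<le> ennreal (ek * Uf y) + (\<integral>\<^sup>+ z. ennreal (- Uf (y + mu * h + sg * z)) \<partial>Nm (sqrt h))"
    proof -
      have "ennreal ek \<le> 1" using ek by simp
      hence "ennreal ek * (\<integral>\<^sup>+ z. ennreal (- Uf (y + mu * h + sg * z)) \<partial>Nm (sqrt h)) \<le> 1 * (\<integral>\<^sup>+ z. ennreal (- Uf (y + mu * h + sg * z)) \<partial>Nm (sqrt h))"
        by (intro mult_right_mono) auto
      thus ?thesis by (simp add: add_left_mono)
    qed
    also have "\<dots> = (\<integral>\<^sup>+ z. ennreal (a * ek * Uf y) + ennreal (a * (- Uf (y + mu * h + sg * z))) \<partial>Nm (sqrt h))"
    proof -
      have "(\<integral>\<^sup>+ z. ennreal (a * ek * Uf y) + ennreal (a * (- Uf (y + mu * h + sg * z))) \<partial>Nm (sqrt h))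
          = (\<integral>\<^sup>+ z. ennreal (a * ek * Uf y) \<partial>Nm (sqrt h)) + (\<integral>\<^sup>+ z. ennreal (a * (- Uf (y + mu * h + sg * z))) \<partial>Nm (sqrt h))"
        by (rule nn_integral_add) measurable
      thus ?thesis using a1 Nm_emeasure[OF h] by simp
    qed
    finally show ?thesis unfolding L R .
  qed
qed

lemma Q_step:
  assumes h: "h > 0"
  shows "Qd h x (Suc k) \<le> Qd h x k + Er h x k"
proof -
  interpret PP: product_prob_space "\<lambda>_::nat. Nm (sqrt h)"
    by (rule product_prob_spaceI) (rule Nm_prob, simp add: h)
  have PNS: "PN h (Suc k) = PiM (insert k {..<k}) (\<lambda>_. Nm (sqrt h))"
    unfolding PN_def by (simp add: lessThan_Suc)
  have PNk: "PN h k = PiM {..<k} (\<lambda>_. Nm (sqrt h))" unfolding PN_def ..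
  define F where "F d = ennreal (Ad h x (Suc k) d * exp (- rh * h * Suc k) * Uf (Yd h x (Suc k) d))" for d
  define A where "A d = ennreal (Ad h x k d * exp (- rh * h * k) * Uf (Yd h x k d))" for d
  define G where "G d = ennreal (Ad h x k d * (- Uf (Yd h x (Suc k) d)))" for d
  note [measurable] = Ad_meas[of "Suc k" "Suc k" h x] Yd_meas[of "Suc k" "Suc k" h x]
     Ad_meas[of k "Suc k" h x] Yd_meas[of k "Suc k" h x]
  have Fm: "F \<in> borel_measurable (PN h (Suc k))" unfolding F_def by measurable
  have Am: "A \<in> borel_measurable (PN h (Suc k))" unfolding A_def by measurable
  have Gm: "G \<in> borel_measurable (PN h (Suc k))" unfolding G_def by measurable
  have "Qd h x (Suc k) = (\<integral>\<^sup>+ d. F d \<partial>PN h (Suc k))" unfolding Qd_def F_def ..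
  also have "\<dots> = (\<integral>\<^sup>+ d. (\<integral>\<^sup>+ z. F (d(k := z)) \<partial>Nm (sqrt h)) \<partial>PN h k)"
    unfolding PNS PNk by (rule PP.product_nn_integral_insert) (use Fm PNS in auto)
  also have "\<dots> \<le> (\<integral>\<^sup>+ d. (\<integral>\<^sup>+ z. A (d(k := z)) + G (d(k := z)) \<partial>Nm (sqrt h)) \<partial>PN h k)"
    by (rule nn_integral_mono) (unfold F_def A_def G_def, rule inner_bound[OF h])
  also have "\<dots> = (\<integral>\<^sup>+ d. A d + G d \<partial>PN h (Suc k))"
    unfolding PNS PNk by (rule PP.product_nn_integral_insert[symmetric]) (use Am Gm PNS in auto)
  also have "\<dots> = (\<integral>\<^sup>+ d. A d \<partial>PN h (Suc k)) + (\<integral>\<^sup>+ d. G d \<partial>PN h (Suc k))"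
    by (rule nn_integral_add[OF Am Gm])
  also have "(\<integral>\<^sup>+ d. A d \<partial>PN h (Suc k)) = Qd h x k"
  proof -
    have "(\<integral>\<^sup>+ d. A d \<partial>PN h (Suc k)) = (\<integral>\<^sup>+ d. (\<integral>\<^sup>+ z. A (d(k := z)) \<partial>Nm (sqrt h)) \<partial>PN h k)"
      unfolding PNS PNk by (rule PP.product_nn_integral_insert) (use Am PNS in auto)
    also have "\<dots> = (\<integral>\<^sup>+ d. A d \<partial>PN h k)"
      by (intro nn_integral_cong) (simp add: A_def Ad_upd Yd_upd Nm_emeasure[OF h])
    finally show ?thesis unfolding Qd_def A_def .
  qed
  also have "(\<integral>\<^sup>+ d. G d \<partial>PN h (Suc k)) = Er h x k" unfolding Er_def G_def ..
  finally show ?thesis .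
qed

lemma Q_bound:
  assumes h: "h > 0" and x: "x > 0"
  shows "Qd h x n \<le> ennreal (Uf x) + (\<Sum>k<n. Er h x k)"
proof (induction n)
  case 0 thus ?case using Q_0[OF h x] by simp
next
  case (Suc n)
  have "Qd h x (Suc n) \<le> Qd h x n + Er h x n" by (rule Q_step[OF h])
  also have "\<dots> \<le> ennreal (Uf x) + (\<Sum>k<n. Er h x k) + Er h x n" using Suc.IH by (rule add_right_mono)
  finally show ?case by (simp add: add.assoc)
qed

end

lemma marg:
  assumes h: "h > 0" and JK: "J \<subseteq> K" "finite K"
    and f: "f \<in> borel_measurable (PiM J (\<lambda>_. Nm (sqrt h)))"
  shows "(\<integral>\<^sup>+ d. f (restrict d J) \<partial>PiM K (\<lambda>_. Nm (sqrt h))) = (\<integral>\<^sup>+ d. f d \<partial>PiM J (\<lambda>_. Nm (sqrt h)))"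
proof -
  interpret PP: product_prob_space "\<lambda>_::'i. Nm (sqrt h)"
    by (rule product_prob_spaceI) (rule Nm_prob, simp add: h)
  have D: "PiM J (\<lambda>_. Nm (sqrt h)) = distr (PiM K (\<lambda>_. Nm (sqrt h))) (PiM J (\<lambda>_. Nm (sqrt h))) (\<lambda>f. restrict f J)"
    by (rule PP.distr_restrict[OF JK])
  show ?thesis
    by (subst D, subst nn_integral_distr) (use f JK in \<open>auto simp: measurable_restrict_subset simp flip: D\<close>)
qed

context prm
begin

definition "gg a w = (if a < \<bar>w\<bar> then kap * exp (R2 * \<bar>w\<bar>) else 0)"

lemma gg_nonneg: "0 \<le> gg a w" unfolding gg_def using kap_pos by auto

lemma Yd_restrict: "j \<le> m \<Longrightarrow> Yd h x j (restrict d {..<m}) = Yd h x j d"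
  unfolding Yd_def by (intro arg_cong[where f="\<lambda>s. x + s"] sum.cong) auto

lemma Ad_restrict: "k \<le> m \<Longrightarrow> Ad h x k (restrict d {..<m}) = Ad h x k d"
  unfolding Ad_def by (intro prod.cong) (auto simp: Yd_restrict)

lemma Ad_pos_all: "Ad h x k d \<noteq> 0 \<Longrightarrow> j \<le> k \<Longrightarrow> 0 < Yd h x j d"
  unfolding Ad_def by (subst (asm) prod_zero_iff) (auto split: if_splits simp: Ball_def)

lemma Er_PN:
  assumes h: "h > 0" and kn: "k < n"
  shows "Er h x k = (\<integral>\<^sup>+ d. ennreal (Ad h x k d * (- Uf (Yd h x (Suc k) d))) \<partial>PN h n)"
proof -
  note [measurable] = Ad_meas[of k "Suc k" h x] Yd_meas[of "Suc k" "Suc k" h x]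
  have m: "(\<lambda>d. ennreal (Ad h x k d * (- Uf (Yd h x (Suc k) d)))) \<in> borel_measurable (PN h (Suc k))"
    by measurable
  have "(\<integral>\<^sup>+ d. ennreal (Ad h x k d * (- Uf (Yd h x (Suc k) d))) \<partial>PN h n)
     = (\<integral>\<^sup>+ d. ennreal (Ad h x k (restrict d {..<Suc k}) * (- Uf (Yd h x (Suc k) (restrict d {..<Suc k})))) \<partial>PN h n)"
    by (simp add: Ad_restrict Yd_restrict)
  also have "\<dots> = Er h x k"
    unfolding Er_def PN_def
    by (rule marg[OF h, of "{..<Suc k}" "{..<n}" "\<lambda>d. ennreal (Ad h x k d * (- Uf (Yd h x (Suc k) d)))"])
       (use kn m in \<open>auto simp: PN_def\<close>)
  finally show ?thesis ..
qed

lemma single_PN: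
  assumes h: "h > 0" and kn: "k < n"
  shows "(\<integral>\<^sup>+ d. ennreal (gg a (mu * h + sg * d k)) \<partial>PN h n) = (\<integral>\<^sup>+ z. ennreal (gg a (mu * h + sg * z)) \<partial>Nm (sqrt h))"
proof -
  interpret PP: product_prob_space "\<lambda>_::nat. Nm (sqrt h)"
    by (rule product_prob_spaceI) (rule Nm_prob, simp add: h)
  have gm: "(\<lambda>z. ennreal (gg a (mu * h + sg * z))) \<in> borel_measurable (Nm (sqrt h))"
    unfolding gg_def by measurable
  have m: "(\<lambda>d. ennreal (gg a (mu * h + sg * d k))) \<in> borel_measurable (PiM {k} (\<lambda>_. Nm (sqrt h)))"
    by (rule measurable_compose[OF measurable_component_singleton[where M="\<lambda>_. Nm (sqrt h)" and I="{k}" and i=k] gm]) simp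
  have "(\<integral>\<^sup>+ d. ennreal (gg a (mu * h + sg * d k)) \<partial>PN h n)
      = (\<integral>\<^sup>+ d. ennreal (gg a (mu * h + sg * (restrict d {k}) k)) \<partial>PN h n)" by simp
  also have "\<dots> = (\<integral>\<^sup>+ d. ennreal (gg a (mu * h + sg * d k)) \<partial>PiM {k} (\<lambda>_. Nm (sqrt h)))"
    unfolding PN_def
    by (rule marg[OF h, of "{k}" "{..<n}" "\<lambda>d. ennreal (gg a (mu * h + sg * d k))"]) (use kn m in auto)
  also have "\<dots> = (\<integral>\<^sup>+ z. ennreal (gg a (mu * h + sg * z)) \<partial>Nm (sqrt h))"
    by (rule PP.product_nn_integral_singleton[OF gm])
  finally show ?thesis .
qed

lemma pw_bound:
  assumes a: "a \<ge> 0"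
  shows "(\<Sum>k<n. ennreal (Ad h x k d * (- Uf (Yd h x (Suc k) d))))
     \<le> ennreal (phi a) + (\<Sum>k<n. ennreal (gg a (mu * h + sg * d k)))"
proof -
  define t where "t k = Ad h x k d * (- Uf (Yd h x (Suc k) d))" for k
  have pa: "0 \<le> phi a" using phi_mono[OF a] phi_0 by simp
  have nz: "Ad h x k d = 1 \<and> Yd h x (Suc k) d \<le> 0" if "t k > 0" for k
  proof -
    have "Ad h x k d \<noteq> 0" using that unfolding t_def by auto
    hence A1: "Ad h x k d = 1" using Ad_01 by blast
    hence "Uf (Yd h x (Suc k) d) < 0" using that unfolding t_def by simp
    hence "\<not> 0 < Yd h x (Suc k) d" using Uf_pos by force
    thus ?thesis using A1 by simp
  qed
  have un: "k = l" if "t k > 0" "t l > 0" for k l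
  proof (rule ccontr)
    assume "k \<noteq> l"
    then consider "k < l" | "l < k" by linarith
    thus False
    proof cases
      case 1
      have "0 < Yd h x (Suc k) d" using Ad_pos_all[of h x l d "Suc k"] nz[OF that(2)] 1 by simp
      thus False using nz[OF that(1)] by simp
    next
      case 2
      have "0 < Yd h x (Suc l) d" using Ad_pos_all[of h x k d "Suc l"] nz[OF that(1)] 2 by simp
      thus False using nz[OF that(2)] by simp
    qed
  qed
  have bd: "t k \<le> phi a + gg a (mu * h + sg * d k)" if "t k > 0" for k
  proof -
    define w where "w = mu * h + sg * d k"
    have A1: "Ad h x k d = 1" and Yn: "Yd h x (Suc k) d \<le> 0" using nz[OF that] by auto
    have Yk: "0 < Yd h x k d" using Ad_1[of h x k d] A1 by simp
    have YS: "Yd h x (Suc k) d = Yd h x k d + w" unfolding Yd_Suc w_def ..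
    have "t k = phi (- Yd h x (Suc k) d)" unfolding t_def A1 using Uf_neg[OF Yn] by simp
    also have "\<dots> \<le> phi \<bar>w\<bar>" using Yn Yk YS by (intro phi_mono) auto
    also have "\<dots> \<le> phi a + gg a w"
    proof (cases "a < \<bar>w\<bar>")
      case True thus ?thesis using phi_le[of "\<bar>w\<bar>"] pa unfolding gg_def by simp
    next
      case False thus ?thesis using phi_mono[of "\<bar>w\<bar>" a] gg_nonneg[of a w] by simp
    qed
    finally show ?thesis unfolding w_def .
  qed
  have zero: "ennreal (t k) = 0" if "\<not> t k > 0" for k
    using that by (simp add: ennreal_neg)
  show ?thesis
  proof (cases "\<exists>k<n. t k > 0")
    case False
    hence "(\<Sum>k<n. ennreal (t k)) = 0" using zero by simp
    thus ?thesis unfolding t_def by simp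
  next
    case True
    then obtain k0 where k0: "k0 < n" "t k0 > 0" by blast
    have "(\<Sum>k<n. ennreal (t k)) = ennreal (t k0) + (\<Sum>k\<in>{..<n} - {k0}. ennreal (t k))"
      using k0 by (subst sum.remove[of _ k0]) auto
    also have "(\<Sum>k\<in>{..<n} - {k0}. ennreal (t k)) = 0"
      using un[OF k0(2)] zero by (intro sum.neutral) (metis Diff_iff singletonI)
    also have "ennreal (t k0) + 0 \<le> ennreal (phi a + gg a (mu * h + sg * d k0))"
      using bd[OF k0(2)] by (simp add: ennreal_leI)
    also have "\<dots> = ennreal (phi a) + ennreal (gg a (mu * h + sg * d k0))"
      using pa gg_nonneg by (simp add: ennreal_plus)
    also have "\<dots> \<le> ennreal (phi a) + (\<Sum>k<n. ennreal (gg a (mu * h + sg * d k)))"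
      using k0 by (intro add_left_mono member_le_sum) auto
    finally show ?thesis unfolding t_def .
  qed
qed

lemma err_sum:
  assumes h: "h > 0" and a: "a \<ge> 0"
  shows "(\<Sum>k<n. Er h x k) \<le> ennreal (phi a) + of_nat n * (\<integral>\<^sup>+ z. ennreal (gg a (mu * h + sg * z)) \<partial>Nm (sqrt h))"
proof -
  have m1: "(\<lambda>d. ennreal (Ad h x k d * (- Uf (Yd h x (Suc k) d)))) \<in> borel_measurable (PN h n)" if "k \<in> {..<n}" for k
  proof -
    have k1: "k \<le> n" "Suc k \<le> n" using that by auto
    note [measurable] = Ad_meas[OF k1(1), of h x] Yd_meas[OF k1(2), of h x]
    show ?thesis by measurable
  qed
  have m2: "(\<lambda>d. ennreal (gg a (mu * h + sg * d k))) \<in> borel_measurable (PN h n)" if "k \<in> {..<n}" for k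
  proof -
    have gm: "(\<lambda>z. ennreal (gg a (mu * h + sg * z))) \<in> borel_measurable (Nm (sqrt h))"
      unfolding gg_def by measurable
    show ?thesis unfolding PN_def
      by (rule measurable_compose[OF measurable_component_singleton[where M="\<lambda>_. Nm (sqrt h)" and I="{..<n}" and i=k] gm]) (use that in auto)
  qed
  have "(\<Sum>k<n. Er h x k) = (\<Sum>k<n. \<integral>\<^sup>+ d. ennreal (Ad h x k d * (- Uf (Yd h x (Suc k) d))) \<partial>PN h n)"
    by (intro sum.cong) (auto simp: Er_PN[OF h])
  also have "\<dots> = (\<integral>\<^sup>+ d. (\<Sum>k<n. ennreal (Ad h x k d * (- Uf (Yd h x (Suc k) d)))) \<partial>PN h n)"
    by (rule nn_integral_sum[symmetric]) (rule m1)
  also have "\<dots> \<le> (\<integral>\<^sup>+ d. ennreal (phi a) + (\<Sum>k<n. ennreal (gg a (mu * h + sg * d k))) \<partial>PN h n)"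
    by (rule nn_integral_mono) (rule pw_bound[OF a])
  also have "\<dots> = ennreal (phi a) + (\<Sum>k<n. \<integral>\<^sup>+ d. ennreal (gg a (mu * h + sg * d k)) \<partial>PN h n)"
  proof -
    have "(\<integral>\<^sup>+ d. ennreal (phi a) + (\<Sum>k<n. ennreal (gg a (mu * h + sg * d k))) \<partial>PN h n)
      = (\<integral>\<^sup>+ d. ennreal (phi a) \<partial>PN h n) + (\<integral>\<^sup>+ d. (\<Sum>k<n. ennreal (gg a (mu * h + sg * d k))) \<partial>PN h n)"
      by (rule nn_integral_add) (use m2 in \<open>auto intro!: borel_measurable_sum\<close>)
    also have "(\<integral>\<^sup>+ d. (\<Sum>k<n. ennreal (gg a (mu * h + sg * d k))) \<partial>PN h n) = (\<Sum>k<n. \<integral>\<^sup>+ d. ennreal (gg a (mu * h + sg * d k)) \<partial>PN h n)"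
      by (rule nn_integral_sum) (rule m2)
    finally show ?thesis using PN_emeasure[OF h] by simp
  qed
  also have "(\<Sum>k<n. \<integral>\<^sup>+ d. ennreal (gg a (mu * h + sg * d k)) \<partial>PN h n) = (\<Sum>k<n. \<integral>\<^sup>+ z. ennreal (gg a (mu * h + sg * z)) \<partial>Nm (sqrt h))"
    by (intro sum.cong) (auto simp: single_PN[OF h])
  also have "\<dots> = of_nat n * (\<integral>\<^sup>+ z. ennreal (gg a (mu * h + sg * z)) \<partial>Nm (sqrt h))" by simp
  finally show ?thesis .
qed

end

context prm
begin

definition "eB = exp (R2 * mu + mu + sg\<^sup>2 * (R2 + 1)\<^sup>2 / 2)"
definition "CG = 512 * kap * eB"

lemma gg_pw:
  assumes h: "0 < h" and a: "0 < a"
  shows "gg a w \<le> kap * 256 * h\<^sup>2 / a ^ 4 * (exp ((R2 + 1 / sqrt h) * w) + exp (- (R2 + 1 / sqrt h) * w))"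
proof -
  define c where "c = R2 + 1 / sqrt h"
  define u where "u = \<bar>w\<bar>"
  have K: "0 \<le> kap * 256 * h\<^sup>2 / a ^ 4" using kap_pos by simp
  show ?thesis
  proof (cases "a < u")
    case False
    have "gg a w = 0" using False unfolding gg_def u_def by simp
    moreover have "0 \<le> kap * 256 * h\<^sup>2 / a ^ 4 * (exp ((R2 + 1 / sqrt h) * w) + exp (- (R2 + 1 / sqrt h) * w))"
      using K by (intro mult_nonneg_nonneg add_nonneg_nonneg) auto
    ultimately show ?thesis by simp
  next
    case True
    have sh: "sqrt h > 0" using h by simp
    have u0: "0 \<le> u" unfolding u_def by simp
    have "u ^ 4 = (sqrt h) ^ 4 * (u / sqrt h) ^ 4" using sh by (simp add: power_divide)
    also have "(sqrt h) ^ 4 = h\<^sup>2"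
    proof -
      have "(sqrt h) ^ 4 = ((sqrt h)\<^sup>2)\<^sup>2" by (simp flip: power_mult)
      thus ?thesis using h by simp
    qed
    also have "(u / sqrt h) ^ 4 \<le> 256 * exp (u / sqrt h)" using u0 sh by (intro pow4_le_exp) simp
    finally have u4: "u ^ 4 \<le> h\<^sup>2 * (256 * exp (u / sqrt h))" using h by (simp add: mult_left_mono)
    have "1 \<le> (u / a) ^ 4" using True a by (simp add: one_le_power)
    hence "kap * exp (R2 * u) \<le> kap * exp (R2 * u) * ((u / a) ^ 4)"
      using kap_pos mult_left_mono[of 1 "(u / a) ^ 4" "kap * exp (R2 * u)"] by simp
    also have "\<dots> = kap * exp (R2 * u) * u ^ 4 / a ^ 4" by (simp add: power_divide)
    also have "\<dots> \<le> kap * exp (R2 * u) * (h\<^sup>2 * (256 * exp (u / sqrt h))) / a ^ 4"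
      using u4 kap_pos a by (intro divide_right_mono mult_left_mono) auto
    also have "\<dots> = kap * 256 * h\<^sup>2 / a ^ 4 * exp (c * u)"
      unfolding c_def by (simp add: exp_add[symmetric] algebra_simps)
    also have "exp (c * u) \<le> exp (c * w) + exp (- c * w)"
      unfolding u_def by (cases "w \<ge> 0") (auto simp: add_increasing add_increasing2)
    hence "kap * 256 * h\<^sup>2 / a ^ 4 * exp (c * u) \<le> kap * 256 * h\<^sup>2 / a ^ 4 * (exp (c * w) + exp (- c * w))"
      using K by (rule mult_left_mono)
    finally show ?thesis using True unfolding gg_def u_def c_def by simp
  qed
qed

lemma Gint_bound:
  assumes h: "0 < h" "h \<le> 1" and a: "0 < a"
  shows "(\<integral>\<^sup>+ z. ennreal (gg a (mu * h + sg * z)) \<partial>Nm (sqrt h)) \<le> ennreal (CG * h\<^sup>2 / a ^ 4)"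
proof -
  define c where "c = R2 + 1 / sqrt h"
  define K where "K = kap * 256 * h\<^sup>2 / a ^ 4"
  have K0: "0 \<le> K" unfolding K_def using kap_pos by simp
  have sh: "sqrt h > 0" "sqrt h \<le> 1" using h by auto
  define Ip where "Ip = exp (c * (mu * h) + c\<^sup>2 * sg\<^sup>2 * (sqrt h)\<^sup>2 / 2)"
  define Im where "Im = exp ((- c) * (mu * h) + (- c)\<^sup>2 * sg\<^sup>2 * (sqrt h)\<^sup>2 / 2)"
  have HB: "has_bochner_integral (Nm (sqrt h)) (\<lambda>z. K * (exp (c * (mu * h + sg * z)) + exp ((- c) * (mu * h + sg * z)))) (K * (Ip + Im))"
    unfolding Ip_def Im_def
    by (intro has_bochner_integral_mult_right has_bochner_integral_add mgf_aff sh)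
  have "(\<integral>\<^sup>+ z. ennreal (gg a (mu * h + sg * z)) \<partial>Nm (sqrt h))
      \<le> (\<integral>\<^sup>+ z. ennreal (K * (exp (c * (mu * h + sg * z)) + exp ((- c) * (mu * h + sg * z)))) \<partial>Nm (sqrt h))"
    by (rule nn_integral_mono, rule ennreal_leI) (use gg_pw[OF h(1) a] in \<open>simp add: K_def c_def\<close>)
  also have "\<dots> = ennreal (K * (Ip + Im))"
  proof -
    have "(\<integral>\<^sup>+ z. ennreal (K * (exp (c * (mu * h + sg * z)) + exp ((- c) * (mu * h + sg * z)))) \<partial>Nm (sqrt h))
        = ennreal (\<integral>z. K * (exp (c * (mu * h + sg * z)) + exp ((- c) * (mu * h + sg * z))) \<partial>Nm (sqrt h))"
      by (rule nn_integral_eq_integral[OF integrable.intros[OF HB]]) (use K0 in \<open>auto intro!: mult_nonneg_nonneg add_nonneg_nonneg\<close>)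
    also have "(\<integral>z. K * (exp (c * (mu * h + sg * z)) + exp ((- c) * (mu * h + sg * z))) \<partial>Nm (sqrt h)) = K * (Ip + Im)"
      by (rule has_bochner_integral_integral_eq[OF HB])
    finally show ?thesis .
  qed
  also have "K * (Ip + Im) \<le> K * (eB + eB)"
  proof -
    have ch: "c * h \<le> R2 + 1"
    proof -
      have "c * h = R2 * h + sqrt h" unfolding c_def using h(1)
        by (simp add: algebra_simps) (metis real_div_sqrt less_imp_le)
      also have "\<dots> \<le> R2 * 1 + 1" using h sh R2_pos by (intro add_mono mult_left_mono) auto
      finally show ?thesis by simp
    qed
    have c0: "0 \<le> c" unfolding c_def using R2_pos sh by simp
    have c2: "c\<^sup>2 * (sqrt h)\<^sup>2 \<le> (R2 + 1)\<^sup>2"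
    proof -
      have "c * sqrt h = R2 * sqrt h + 1" unfolding c_def using sh by (simp add: algebra_simps)
      also have "\<dots> \<le> R2 + 1" using sh R2_pos by (simp add: mult_left_le)
      finally have "c * sqrt h \<le> R2 + 1" .
      hence "(c * sqrt h)\<^sup>2 \<le> (R2 + 1)\<^sup>2" using c0 sh by (intro power_mono) auto
      thus ?thesis by (simp add: power_mult_distrib)
    qed
    have e2: "c\<^sup>2 * sg\<^sup>2 * (sqrt h)\<^sup>2 / 2 \<le> sg\<^sup>2 * (R2 + 1)\<^sup>2 / 2"
      using mult_left_mono[OF c2, of "sg\<^sup>2"] by (simp add: algebra_simps)
    have e1: "c * (mu * h) \<le> R2 * mu + mu"
      using mult_left_mono[OF ch, of mu] mu by (simp add: algebra_simps)
    have e1': "(- c) * (mu * h) \<le> R2 * mu + mu"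
    proof -
      have "0 \<le> c * (mu * h)" using c0 mu h by simp
      moreover have "0 \<le> R2 * mu" using R2_pos mu by simp
      ultimately show ?thesis using mu by simp
    qed
    have "Ip \<le> eB" unfolding Ip_def eB_def using e1 e2 by simp
    moreover have "Im \<le> eB" unfolding Im_def eB_def using e1' e2 by simp
    ultimately show ?thesis using K0 by (intro mult_left_mono add_mono) auto
  qed
  also have "K * (eB + eB) = CG * h\<^sup>2 / a ^ 4" unfolding K_def CG_def by (simp add: algebra_simps)
  finally show ?thesis by (simp add: ennreal_leI)
qed

lemma CG_pos: "CG > 0" unfolding CG_def eB_def using kap_pos by simp

lemma Qd_n_bound:
  assumes h: "0 < h" "h \<le> 1" and a: "0 < a" and x: "0 < x"
  shows "Qd h x n \<le> ennreal (Uf x + phi a + real n * (CG * h\<^sup>2 / a ^ 4))"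
proof -
  have pa: "0 \<le> phi a" using phi_mono[of 0 a] a phi_0 by simp
  have ux: "0 \<le> Uf x" using Uf_pos[OF x] by simp
  have c: "0 \<le> CG * h\<^sup>2 / a ^ 4" using CG_pos by simp
  have "Qd h x n \<le> ennreal (Uf x) + (\<Sum>k<n. Er h x k)" by (rule Q_bound[OF h(1) x])
  also have "\<dots> \<le> ennreal (Uf x) + (ennreal (phi a) + of_nat n * ennreal (CG * h\<^sup>2 / a ^ 4))"
  proof -
    have "(\<Sum>k<n. Er h x k) \<le> ennreal (phi a) + of_nat n * (\<integral>\<^sup>+ z. ennreal (gg a (mu * h + sg * z)) \<partial>Nm (sqrt h))"
      using err_sum[OF h(1), of a x n] a by simp
    also have "\<dots> \<le> ennreal (phi a) + of_nat n * ennreal (CG * h\<^sup>2 / a ^ 4)"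
      by (intro add_left_mono mult_left_mono Gint_bound[OF h a]) simp
    finally show ?thesis by (rule add_left_mono)
  qed
  also have "\<dots> = ennreal (Uf x + phi a + real n * (CG * h\<^sup>2 / a ^ 4))"
  proof -
    have "ennreal (real n) * ennreal (CG * h\<^sup>2 / a ^ 4) = ennreal (real n * (CG * h\<^sup>2 / a ^ 4))"
      by (rule ennreal_mult'[symmetric]) simp
    moreover have "0 \<le> real n * (CG * h\<^sup>2 / a ^ 4)" using c by (intro mult_nonneg_nonneg) auto
    ultimately show ?thesis using pa ux c
      by (simp add: ennreal_of_nat_eq_real_of_nat ennreal_plus[symmetric] add.assoc del: ennreal_plus)
  qed
  finally show ?thesis .
qed

lemma KEY:
  assumes x: "0 < x" and e: "0 < e" and Dl: "0 < Dl"
  shows "\<exists>n>0. Dl / real n \<le> 1 \<and> Qd (Dl / real n) x n \<le> ennreal (Uf x + e)"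
proof -
  obtain a where a: "0 < a" "phi a < e / 2" using phi_small[of "e/2"] e by auto
  obtain n :: nat where n: "real n > max 1 (max Dl (2 * CG * Dl\<^sup>2 / (a ^ 4 * e)))"
    using reals_Archimedean2 by blast
  have n0: "n > 0" using n by simp
  define h where "h = Dl / real n"
  have h0: "0 < h" unfolding h_def using Dl n0 by simp
  have h1: "h \<le> 1" unfolding h_def using n Dl by (simp add: divide_le_eq)
  have "real n * (CG * h\<^sup>2 / a ^ 4) = CG * Dl\<^sup>2 / (a ^ 4 * real n)"
    unfolding h_def using n0 by (simp add: power2_eq_square field_simps)
  also have "\<dots> < e / 2"
  proof -
    have pos: "0 < a ^ 4 * e" using a e by simp
    have "2 * CG * Dl\<^sup>2 / (a ^ 4 * e) < real n" using n by simp
    hence "2 * CG * Dl\<^sup>2 < real n * (a ^ 4 * e)" using pos by (simp add: divide_less_eq)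
    thus ?thesis using n0 a e by (simp add: divide_less_eq field_simps)
  qed
  finally have small: "real n * (CG * h\<^sup>2 / a ^ 4) < e / 2" .
  have "Qd h x n \<le> ennreal (Uf x + phi a + real n * (CG * h\<^sup>2 / a ^ 4))"
    by (rule Qd_n_bound[OF h0 h1 a(1) x])
  also have "\<dots> \<le> ennreal (Uf x + e)" using a small by (intro ennreal_leI) linarith
  finally show ?thesis using n0 h1 unfolding h_def by blast
qed

end

context prm
begin

lemma transfer:
  fixes P :: "'a measure" and W :: "real \<Rightarrow> 'a \<Rightarrow> real"
  assumes BM: "std_BM P W" and h: "h > 0" and n: "n > 0"
    and f: "f \<in> borel_measurable (PN h n)"
  shows "(\<integral>\<^sup>+ \<omega>. f (\<lambda>i\<in>{..<n}. W (real (Suc i) * h) \<omega> - W (real i * h) \<omega>) \<partial>P) = (\<integral>\<^sup>+ d. f d \<partial>PN h n)"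
proof -
  interpret prob_space P using BM unfolding std_BM_def by simp
  define D where "D i \<omega> = W (real (Suc i) * h) \<omega> - W (real i * h) \<omega>" for i \<omega>
  have Wm: "W t \<in> borel_measurable P" for t using BM unfolding std_BM_def by simp
  have Dm: "D i \<in> borel_measurable P" for i unfolding D_def using Wm by measurable
  have ind: "indep_vars (\<lambda>_. borel) D {..<n}"
  proof -
    have "\<forall>(ts :: nat \<Rightarrow> real) n. (ts 0 \<ge> 0 \<and> (\<forall>i<n. ts i < ts (Suc i))) \<longrightarrow>
        indep_vars (\<lambda>_. borel) (\<lambda>i \<omega>. W (ts (Suc i)) \<omega> - W (ts i) \<omega>) {..<n}"
      using BM unfolding std_BM_def by blast
    from this[rule_format, of "\<lambda>i. real i * h" n] h show ?thesis unfolding D_def by simp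
  qed
  have dD: "distr P borel (D i) = Nm (sqrt h)" for i
  proof -
    have "distributed P lborel (\<lambda>\<omega>. W (real (Suc i) * h) \<omega> - W (real i * h) \<omega>)
        (\<lambda>y. ennreal (normal_density 0 (sqrt (real (Suc i) * h - real i * h)) y))"
      using BM h unfolding std_BM_def by (auto simp: mult_less_cancel_right)
    hence "distr P lborel (D i) = density lborel (\<lambda>y. ennreal (normal_density 0 (sqrt h) y))"
      unfolding distributed_def D_def by (simp add: algebra_simps)
    moreover have "distr P borel (D i) = distr P lborel (D i)" by (rule distr_cong) auto
    ultimately show ?thesis unfolding Nm_def by simp
  qed
  have DP: "distr P (PiM {..<n} (\<lambda>_. borel)) (\<lambda>\<omega>. \<lambda>i\<in>{..<n}. D i \<omega>) = PN h n"
  proof -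
    have "distr P (PiM {..<n} (\<lambda>_. borel)) (\<lambda>\<omega>. \<lambda>i\<in>{..<n}. D i \<omega>) = PiM {..<n} (\<lambda>i. distr P borel (D i))"
      using ind by (subst (asm) indep_vars_iff_distr_eq_PiM) (use n Dm in auto)
    also have "\<dots> = PN h n" unfolding PN_def by (rule PiM_cong) (auto simp: dD)
    finally show ?thesis .
  qed
  have sPN: "sets (PN h n) = sets (PiM {..<n} (\<lambda>_. borel :: real measure))"
    unfolding PN_def by (rule sets_PiM_cong) auto
  have eq: "(borel_measurable (PN h n) :: ((nat \<Rightarrow> real) \<Rightarrow> ennreal) set) = borel_measurable (PiM {..<n} (\<lambda>_. borel))"
    by (rule measurable_cong_sets[OF sPN refl])
  have f': "f \<in> borel_measurable (PiM {..<n} (\<lambda>_. borel))"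
    using f unfolding eq .
  have "(\<integral>\<^sup>+ d. f d \<partial>PN h n) = (\<integral>\<^sup>+ d. f d \<partial>distr P (PiM {..<n} (\<lambda>_. borel)) (\<lambda>\<omega>. \<lambda>i\<in>{..<n}. D i \<omega>))"
    unfolding DP ..
  also have "\<dots> = (\<integral>\<^sup>+ \<omega>. f (\<lambda>i\<in>{..<n}. D i \<omega>) \<partial>P)"
    by (rule nn_integral_distr) (use Dm f' in \<open>auto intro!: measurable_restrict\<close>)
  finally show ?thesis unfolding D_def ..
qed

lemma Yd_X:
  fixes P :: "'a measure" and W :: "real \<Rightarrow> 'a \<Rightarrow> real"
  assumes W0: "W 0 \<omega> = 0" and jn: "j \<le> n"
  shows "Yd h x j (\<lambda>i\<in>{..<n}. W (real (Suc i) * h) \<omega> - W (real i * h) \<omega>) = Xproc mu sg W x (real j * h) \<omega>"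
proof -
  have "Yd h x j (\<lambda>i\<in>{..<n}. W (real (Suc i) * h) \<omega> - W (real i * h) \<omega>)
      = x + (\<Sum>i<j. mu * h + sg * (W (real (Suc i) * h) \<omega> - W (real i * h) \<omega>))"
    unfolding Yd_def using jn by (intro arg_cong[where f="\<lambda>s. x + s"] sum.cong) auto
  also have "(\<Sum>i<j. mu * h + sg * (W (real (Suc i) * h) \<omega> - W (real i * h) \<omega>))
      = real j * (mu * h) + sg * (\<Sum>i<j. W (real (Suc i) * h) \<omega> - W (real i * h) \<omega>)"
    by (simp add: sum.distrib sum_distrib_left)
  also have "(\<Sum>i<j. W (real (Suc i) * h) \<omega> - W (real i * h) \<omega>) = W (real j * h) \<omega> - W (real 0 * h) \<omega>"
    by (rule sum_lessThan_telescope[where f="\<lambda>i. W (real i * h) \<omega>"])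
  also have "x + (real j * (mu * h) + sg * (W (real j * h) \<omega> - W (real 0 * h) \<omega>)) = Xproc mu sg W x (real j * h) \<omega>"
    unfolding Xproc_def using W0 by (simp add: algebra_simps)
  finally show ?thesis .
qed

lemma pointwise:
  fixes P :: "'a measure" and W :: "real \<Rightarrow> 'a \<Rightarrow> real"
  assumes BM: "std_BM P W" and \<omega>: "\<omega> \<in> space P" and Dl: "Dl > 0" and n: "n > 0"
    and K: "K \<ge> mu / rh - U0" and x: "x > 0"
  defines "h \<equiv> Dl / real n"
  shows "exp (- rh * Dl) *
            Sup {Uf (Xproc mu sg W x Dl \<omega> + s) - s - K | s. Xproc mu sg W x Dl \<omega> + s \<ge> 0} *
            indicator {\<omega>\<in>space P. hit0 mu sg W x \<omega> > ereal Dl} \<omega>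
    \<le> Ad h x n (\<lambda>i\<in>{..<n}. W (real (Suc i) * h) \<omega> - W (real i * h) \<omega>) * exp (- rh * h * real n)
        * Uf (Yd h x n (\<lambda>i\<in>{..<n}. W (real (Suc i) * h) \<omega> - W (real i * h) \<omega>))"
    (is "?I \<le> ?J")
proof -
  define d where "d = (\<lambda>i\<in>{..<n}. W (real (Suc i) * h) \<omega> - W (real i * h) \<omega>)"
  define X where "X t = Xproc mu sg W x t \<omega>" for t
  have W0: "W 0 \<omega> = 0" using BM \<omega> unfolding std_BM_def by simp
  have hn: "real n * h = Dl" unfolding h_def using n by simp
  have hpos: "h > 0" unfolding h_def using Dl n by simp
  have YX: "Yd h x j d = X (real j * h)" if "j \<le> n" for j
    unfolding d_def X_def by (rule Yd_X) (rule W0, rule that)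
  have ehn: "exp (- rh * h * real n) = exp (- rh * Dl)" using hn by (simp add: algebra_simps)
  have J0: "0 \<le> ?J"
  proof -
    have "0 \<le> Ad h x n d * Uf (Yd h x n d)"
    proof (cases "Ad h x n d = 0")
      case False
      hence "0 < Yd h x n d" by (rule Ad_1)
      thus ?thesis using Uf_pos Ad_nonneg by (simp add: less_imp_le)
    qed simp
    hence "0 \<le> exp (- rh * h * real n) * (Ad h x n d * Uf (Yd h x n d))" by simp
    thus ?thesis unfolding d_def[symmetric] by (simp only: ac_simps)
  qed
  show ?thesis
  proof (cases "hit0 mu sg W x \<omega> > ereal Dl")
    case False
    hence ind0: "indicator {\<omega>\<in>space P. hit0 mu sg W x \<omega> > ereal Dl} \<omega> = (0::real)"
      by (simp add: indicator_def)
    show ?thesis using J0 by (simp only: ind0 mult_zero_right)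
  next
    case True
    have nz: "X t \<noteq> 0" if "0 \<le> t" "t \<le> Dl" for t
    proof
      assume "X t = 0"
      hence "ereal t \<in> ereal ` {t. t \<ge> 0 \<and> Xproc mu sg W x t \<omega> = 0}" using that unfolding X_def by auto
      hence "hit0 mu sg W x \<omega> \<le> ereal t" unfolding hit0_def by (rule Inf_lower)
      with True have "ereal Dl < ereal t" by (rule less_le_trans)
      thus False using that by simp
    qed
    have cont: "continuous_on {0..Dl} X"
    proof -
      have "continuous_on {0..} (\<lambda>t. W t \<omega>)" using BM \<omega> unfolding std_BM_def by simp
      hence "continuous_on {0..Dl} (\<lambda>t. W t \<omega>)" by (rule continuous_on_subset) auto
      thus ?thesis unfolding X_def Xproc_def by (intro continuous_intros)
    qed
    have X0: "X 0 = x" unfolding X_def Xproc_def using W0 by simp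
    have pos: "X t > 0" if t0: "0 \<le> t" and t1: "t \<le> Dl" for t
    proof (rule ccontr)
      assume "\<not> X t > 0"
      hence Xt: "X t \<le> 0" by simp
      have ct: "continuous_on {0..t} X" using cont by (rule continuous_on_subset) (use t1 in auto)
      have "\<exists>s. 0 \<le> s \<and> s \<le> t \<and> X s = 0"
        using IVT2'[of X t 0 0, OF Xt _ t0 ct] X0 x by auto
      then obtain s where "0 \<le> s" "s \<le> t" "X s = 0" by blast
      thus False using nz t1 by auto
    qed
    have Ad1: "Ad h x n d = 1"
      unfolding Ad_def
    proof (rule prod.neutral, intro ballI)
      fix j assume "j \<in> {..n}"
      hence j: "j \<le> n" by simp
      have "real j * h \<le> real n * h" using j hpos by (simp add: mult_right_mono)
      hence "0 < X (real j * h)" using hpos hn by (intro pos) auto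
      thus "(if 0 < Yd h x j d then 1 else 0) = (1::real)" using YX[OF j] by simp
    qed
    have XD: "Yd h x n d = X Dl" using YX[of n] hn by simp
    have XDpos: "X Dl > 0" using pos[of Dl] Dl by simp
    have supb: "Sup {Uf (X Dl + s) - s - K | s. X Dl + s \<ge> 0} \<le> X Dl"
    proof (rule cSup_least)
      show "{Uf (X Dl + s) - s - K | s. X Dl + s \<ge> 0} \<noteq> {}" using XDpos by (auto intro!: exI[of _ 0])
    next
      fix v assume "v \<in> {Uf (X Dl + s) - s - K | s. X Dl + s \<ge> 0}"
      then obtain s where s: "v = Uf (X Dl + s) - s - K" "X Dl + s \<ge> 0" by auto
      have "Uf (X Dl + s) - (X Dl + s) \<le> mu / rh - U0" using Uf_minus_id_le[OF s(2)] .
      thus "v \<le> X Dl" using s K by simp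
    qed
    have "?I = exp (- rh * Dl) * Sup {Uf (X Dl + s) - s - K | s. X Dl + s \<ge> 0}"
      using True \<omega> unfolding X_def by simp
    also have "\<dots> \<le> exp (- rh * Dl) * Uf (X Dl)"
      using supb Uf_ge_id[of "X Dl"] XDpos by (intro mult_left_mono) auto
    also have "\<dots> = ?J" unfolding d_def[symmetric] Ad1 XD ehn by simp
    finally show ?thesis .
  qed
qed

end

context prm
begin

lemma Mop_le:
  fixes P :: "'a measure" and W :: "real \<Rightarrow> 'a \<Rightarrow> real"
  assumes BM: "std_BM P W" and Dl: "Dl > 0" and K: "K \<ge> mu / rh - U0" and x: "x > 0"
  shows "Mop P W mu sg rh Dl K Uf x \<le> Uf x"
proof -
  interpret prob_space P using BM unfolding std_BM_def by simp
  define I where "I \<omega> = exp (- rh * Dl) *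
            Sup {Uf (Xproc mu sg W x Dl \<omega> + s) - s - K | s. Xproc mu sg W x Dl \<omega> + s \<ge> 0} *
            indicator {\<omega>\<in>space P. hit0 mu sg W x \<omega> > ereal Dl} \<omega>" for \<omega>
  have M: "Mop P W mu sg rh Dl K Uf x = integral\<^sup>L P I" unfolding Mop_def I_def ..
  have ux: "0 < Uf x" using Uf_pos[OF x] .
  have NN: "(\<integral>\<^sup>+ \<omega>. ennreal (I \<omega>) \<partial>P) \<le> ennreal (Uf x)"
  proof (rule ennreal_le_epsilon)
    fix e :: real assume e: "0 < e"
    obtain n where n: "n > 0" "Dl / real n \<le> 1" "Qd (Dl / real n) x n \<le> ennreal (Uf x + e)"
      using KEY[OF x e Dl] by blast
    define h where "h = Dl / real n"
    have h: "h > 0" using Dl n by (simp add: h_def)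
    define Jf where "Jf d = ennreal (Ad h x n d * exp (- rh * h * real n) * Uf (Yd h x n d))" for d
    note [measurable] = Ad_meas[of n n h x] Yd_meas[of n n h x]
    have Jm: "Jf \<in> borel_measurable (PN h n)" unfolding Jf_def by measurable
    have "(\<integral>\<^sup>+ \<omega>. ennreal (I \<omega>) \<partial>P) \<le> (\<integral>\<^sup>+ \<omega>. Jf (\<lambda>i\<in>{..<n}. W (real (Suc i) * h) \<omega> - W (real i * h) \<omega>) \<partial>P)"
    proof (rule nn_integral_mono)
      fix \<omega> assume \<omega>: "\<omega> \<in> space P"
      show "ennreal (I \<omega>) \<le> Jf (\<lambda>i\<in>{..<n}. W (real (Suc i) * h) \<omega> - W (real i * h) \<omega>)"
        unfolding I_def Jf_def h_def by (rule ennreal_leI, rule pointwise[OF BM \<omega> Dl n(1) K x])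
    qed
    also have "\<dots> = (\<integral>\<^sup>+ d. Jf d \<partial>PN h n)" by (rule transfer[OF BM h n(1) Jm])
    also have "\<dots> = Qd h x n" unfolding Qd_def Jf_def ..
    also have "\<dots> \<le> ennreal (Uf x + e)" using n(3) unfolding h_def .
    finally show "(\<integral>\<^sup>+ \<omega>. ennreal (I \<omega>) \<partial>P) \<le> ennreal (Uf x) + ennreal e"
      using e ux by (simp add: ennreal_plus)
  qed
  show ?thesis
  proof (cases "integrable P I")
    case True
    have im: "integrable P (\<lambda>\<omega>. max (I \<omega>) 0)" using True by (intro integrable_max) auto
    have "integral\<^sup>L P I \<le> (\<integral>\<omega>. max (I \<omega>) 0 \<partial>P)"
      by (rule integral_mono[OF True im]) simp
    moreover have "ennreal (\<integral>\<omega>. max (I \<omega>) 0 \<partial>P) = (\<integral>\<^sup>+ \<omega>. ennreal (I \<omega>) \<partial>P)"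
    proof -
      have "(\<integral>\<^sup>+ \<omega>. ennreal (max (I \<omega>) 0) \<partial>P) = ennreal (\<integral>\<omega>. max (I \<omega>) 0 \<partial>P)"
        by (rule nn_integral_eq_integral[OF im]) simp
      moreover have "(\<integral>\<^sup>+ \<omega>. ennreal (max (I \<omega>) 0) \<partial>P) = (\<integral>\<^sup>+ \<omega>. ennreal (I \<omega>) \<partial>P)"
        by (intro nn_integral_cong) (auto simp: max_def ennreal_neg)
      ultimately show ?thesis by simp
    qed
    ultimately have "ennreal (\<integral>\<omega>. max (I \<omega>) 0 \<partial>P) \<le> ennreal (Uf x)" using NN by simp
    hence "(\<integral>\<omega>. max (I \<omega>) 0 \<partial>P) \<le> Uf x" using ux by (simp add: ennreal_le_iff)
    with \<open>integral\<^sup>L P I \<le> (\<integral>\<omega>. max (I \<omega>) 0 \<partial>P)\<close> show ?thesis unfolding M by linarith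
  next
    case False
    hence "integral\<^sup>L P I = 0" by (rule not_integrable_integral_eq)
    thus ?thesis unfolding M using ux by simp
  qed
qed

end

theorem proposition2p1:
  fixes P :: "'a measure" and W :: "real \<Rightarrow> 'a \<Rightarrow> real"
    and \<mu> \<sigma> \<rho> \<Delta> K :: real
    and V0 V0' V0'' :: "real \<Rightarrow> real"
  assumes BM: "std_BM P W"
    and pos: "\<mu> > 0" "\<sigma> > 0" "\<rho> > 0" "\<Delta> > 0"
    and K: "K \<ge> 0" "K \<ge> \<mu> / \<rho> - u0 \<mu> \<sigma> \<rho>"
    and V0_d1: "\<And>x. (V0 has_real_derivative V0' x) (at x)"
    and V0_d2: "\<And>x. (V0' has_real_derivative V0'' x) (at x)"
    and V0_ode: "\<And>x. 1/2 * \<sigma>\<^sup>2 * V0'' x + \<mu> * V0' x - \<rho> * V0 x = 0"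
    and V0_init: "V0 (u0 \<mu> \<sigma> \<rho>) = \<mu> / \<rho>" "V0' (u0 \<mu> \<sigma> \<rho>) = 1"
  defines "V \<equiv> (\<lambda>x. if x \<le> u0 \<mu> \<sigma> \<rho> then V0 x else x - u0 \<mu> \<sigma> \<rho> + \<mu> / \<rho>)"
  shows "\<exists>V' V''. C2_on_with {0..} V V' V'' \<and>
           V 0 = 0 \<and>
           (\<forall>x>0.
              V x \<ge> Mop P W \<mu> \<sigma> \<rho> \<Delta> K V x \<and>
              1/2 * \<sigma>\<^sup>2 * V'' x + \<mu> * V' x - \<rho> * V x \<le> 0 \<and>
              V' x \<ge> 1 \<and>
              (V x - Mop P W \<mu> \<sigma> \<rho> \<Delta> K V x) *
                (1/2 * \<sigma>\<^sup>2 * V'' x + \<mu> * V' x - \<rho> * V x) * (V' x - 1) = 0)"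
proof -
  interpret prm \<mu> \<sigma> \<rho> using pos by unfold_locales auto
  have V0E: "V0 = E" by (rule uniq[OF V0_d1 V0_d2 V0_ode V0_init])
  have VU: "V = Uf" unfolding V_def V0E by (rule ext) (simp add: Uf_def Lf_def)
  have C2: "C2_on_with {0..} V Uf1 Uf2"
    unfolding C2_on_with_def VU
    using Uf_deriv Uf1_deriv Uf2_cont by (auto intro: has_field_derivative_at_within)
  have V00: "V 0 = 0" unfolding VU Uf_def using U0_pos E_0 by simp
  have ode: "1/2 * \<sigma>\<^sup>2 * Uf2 x + \<mu> * Uf1 x - \<rho> * Uf x \<le> 0" if "x > 0" for x
  proof (cases "x \<le> U0")
    case True thus ?thesis using E_ode[of x] unfolding Uf_def Uf1_def Uf2_def by simp
  next
    case False
    have "1/2 * \<sigma>\<^sup>2 * Uf2 x + \<mu> * Uf1 x - \<rho> * Uf x = - \<rho> * (x - U0)"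
      using False pos unfolding Uf_def Uf1_def Uf2_def Lf_def by (simp add: algebra_simps)
    thus ?thesis using False pos by (simp add: mult_nonneg_nonneg)
  qed
  have d1: "Uf1 x \<ge> 1" for x unfolding Uf1_def using E1_ge[of x] by simp
  have cs: "(1/2 * \<sigma>\<^sup>2 * Uf2 x + \<mu> * Uf1 x - \<rho> * Uf x) * (Uf1 x - 1) = 0" for x
  proof (cases "x \<le> U0")
    case True thus ?thesis using E_ode[of x] unfolding Uf_def Uf1_def Uf2_def by simp
  next
    case False thus ?thesis unfolding Uf1_def by simp
  qed
  have A: "\<forall>x>0. V x \<ge> Mop P W \<mu> \<sigma> \<rho> \<Delta> K V x \<and>
              1/2 * \<sigma>\<^sup>2 * Uf2 x + \<mu> * Uf1 x - \<rho> * V x \<le> 0 \<and>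
              Uf1 x \<ge> 1 \<and>
              (V x - Mop P W \<mu> \<sigma> \<rho> \<Delta> K V x) *
                (1/2 * \<sigma>\<^sup>2 * Uf2 x + \<mu> * Uf1 x - \<rho> * V x) * (Uf1 x - 1) = 0"
  proof (intro allI impI conjI)
    fix x :: real assume x: "x > 0"
    show "V x \<ge> Mop P W \<mu> \<sigma> \<rho> \<Delta> K V x" unfolding VU by (rule Mop_le[OF BM pos(4) K(2) x])
    show "1/2 * \<sigma>\<^sup>2 * Uf2 x + \<mu> * Uf1 x - \<rho> * V x \<le> 0" unfolding VU by (rule ode[OF x])
    show "Uf1 x \<ge> 1" by (rule d1)
    show "(V x - Mop P W \<mu> \<sigma> \<rho> \<Delta> K V x) * (1/2 * \<sigma>\<^sup>2 * Uf2 x + \<mu> * Uf1 x - \<rho> * V x) * (Uf1 x - 1) = 0"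
      unfolding VU using cs[of x] by (simp add: mult.assoc)
  qed
  show ?thesis using C2 V00 A by blast
qed

end
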